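(* Let $\{a_i,\ell_i,\gamma_i\}$ be a configuration and $a\in\mathbb R^2$ a point. Then exactly one of the following holds: (i) $a$ is non-constructible from the configuration; (ii) for every choice of four points $c_1,c_2,c_3,c_4\in\mathbb R^2$ in general position, the general algorithm started from the configuration and $c_1,\dots,c_4$ constructs $a$, i.e., $a\in S_k$ for some $k$.
   Context: A configuration is a finite collection of points $a_i\in\mathbb R^2$, lines $\ell_i\subset\mathbb R^2$ and curves $\gamma_i\subset\mathbb R^2$. Given a configuration $\{a_i,\ell_i,\gamma_i\}$, call a set $\Sigma\subset\mathbb R^2$ admissible if: (1) $\Sigma$ is dense in $\mathbb R^2$; (2) every $a_i$ lies in $\Sigma$; (3) for any $b_1,b_2,b_3,b_4\in\Sigma$ with $b_1\neq b_2$, $b_3\ne b_4$, if the lines $b_1b_2$ and $b_3b_4$ are distinct and not parallel, then their intersection point lies in $\Sigma$; (4) for any distinct $b_1,b_2\in\Sigma$, every isolated intersection point of the line $b_1b_2$ with any of the lines $\ell_i$ or curves $\gamma_j$ lies in $\Sigma$. A point $a$ is non-constructible from the configuration if there exists an admissible set $\Sigma$ with $a\notin\Sigma$. Four points $c_1,\dots,c_4$ are in general position if no three of them are collinear and no two of the six lines $c_jc_k$ are parallel. The general algorithm: set $S_0=\{a_i\}\cup\{c_1,c_2,c_3,c_4\}$ and $L_0=\{\ell_i\}$; given $S_k,L_k$, let $L_{k+1}=L_k\cup\{\text{lines through two distinct points of } S_k\}$ and let $S_{k+1}$ be $S_k$ together with all intersection points of pairs of distinct non-parallel lines in $L_{k+1}$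 and all isolated intersection points of lines in $L_{k+1}$ with the curves $\gamma_j$. The algorithm constructs $a$ if $a\in S_k$ for some $k$. *)

theory Defs
  imports "HOL-Analysis.Analysis"
begin

type_synonym pt = "real \<times> real"

definition line_through :: "pt \<Rightarrow> pt \<Rightarrow> pt set" where
  "line_through p q = {p + t *\<^sub>R (q - p) | t. True}"

definition is_line :: "pt set \<Rightarrow> bool" where
  "is_line L \<longleftrightarrow> (\<exists>p q. p \<noteq> q \<and> L = line_through p q)"

text \<open>Two lines are parallel if one is a translate of the other (equal lines count as parallel).\<close>
definition parallel :: "pt set \<Rightarrow> pt set \<Rightarrow> bool" where
  "parallel L1 L2 \<longleftrightarrow> (\<exists>v. L2 = (\<lambda>x. x + v) ` L1)"

definition admissible :: "pt set \<Rightarrow> pt set set \<Rightarrow> pt set set \<Rightarrow> pt set \<Rightarrow> bool" where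
  "admissible A Ls Gs \<Sigma> \<longleftrightarrow>
     closure \<Sigma> = UNIV \<and>
     A \<subseteq> \<Sigma> \<and>
     (\<forall>b1\<in>\<Sigma>. \<forall>b2\<in>\<Sigma>. \<forall>b3\<in>\<Sigma>. \<forall>b4\<in>\<Sigma>. \<forall>x.
        b1 \<noteq> b2 \<and> b3 \<noteq> b4 \<and> line_through b1 b2 \<noteq> line_through b3 b4 \<and>
        \<not> parallel (line_through b1 b2) (line_through b3 b4) \<and>
        x \<in> line_through b1 b2 \<inter> line_through b3 b4 \<longrightarrow> x \<in> \<Sigma>) \<and>
     (\<forall>b1\<in>\<Sigma>. \<forall>b2\<in>\<Sigma>. \<forall>x. b1 \<noteq> b2 \<longrightarrow>
        (\<forall>L\<in>Ls. x isolated_in (line_through b1 b2 \<inter> L) \<longrightarrow> x \<in> \<Sigma>) \<and>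
        (\<forall>g\<in>Gs. x isolated_in (line_through b1 b2 \<inter> g) \<longrightarrow> x \<in> \<Sigma>))"

definition non_constructible :: "pt set \<Rightarrow> pt set set \<Rightarrow> pt set set \<Rightarrow> pt \<Rightarrow> bool" where
  "non_constructible A Ls Gs a \<longleftrightarrow> (\<exists>\<Sigma>. admissible A Ls Gs \<Sigma> \<and> a \<notin> \<Sigma>)"

definition general_position :: "(nat \<Rightarrow> pt) \<Rightarrow> bool" where
  "general_position c \<longleftrightarrow>
     inj_on c {..<4} \<and>
     (\<forall>i<4. \<forall>j<4. \<forall>k<4. i \<noteq> j \<and> j \<noteq> k \<and> i \<noteq> k \<longrightarrow> \<not> collinear {c i, c j, c k}) \<and>
     (\<forall>i<4. \<forall>j<4. \<forall>k<4. \<forall>l<4. i \<noteq> j \<and> k \<noteq> l \<and> {i, j} \<noteq> {k, l} \<longrightarrow>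
        \<not> parallel (line_through (c i) (c j)) (line_through (c k) (c l)))"

text \<open>The general algorithm: alg A Ls Gs c k = (S_k, L_k).\<close>
fun alg :: "pt set \<Rightarrow> pt set set \<Rightarrow> pt set set \<Rightarrow> (nat \<Rightarrow> pt) \<Rightarrow> nat \<Rightarrow> pt set \<times> pt set set" where
  "alg A Ls Gs c 0 = (A \<union> c ` {..<4}, Ls)"
| "alg A Ls Gs c (Suc k) =
     (let S = fst (alg A Ls Gs c k);
          L' = snd (alg A Ls Gs c k) \<union> {line_through p q | p q. p \<in> S \<and> q \<in> S \<and> p \<noteq> q}
      in (S \<union> {x. \<exists>L1\<in>L'. \<exists>L2\<in>L'. L1 \<noteq> L2 \<and> \<not> parallel L1 L2 \<and> x \<in> L1 \<inter> L2}
            \<union> {x. \<exists>L1\<in>L'. \<exists>g\<in>Gs. x isolated_in (L1 \<inter> g)},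
          L'))"

end

theory Submission
  imports Defs
begin

definition det2 :: "pt \<Rightarrow> pt \<Rightarrow> real" where
  "det2 u v = fst u * snd v - snd u * fst v"

lemma det2_lin:
  "det2 (a + b) c = det2 a c + det2 b c" "det2 (a - b) c = det2 a c - det2 b c"
  "det2 c (a + b) = det2 c a + det2 c b" "det2 c (a - b) = det2 c a - det2 c b"
  "det2 (t *\<^sub>R a) c = t * det2 a c" "det2 c (t *\<^sub>R a) = t * det2 c a"
  "det2 a a = 0" "det2 (-a) c = - det2 a c" "det2 c (-a) = - det2 c a"
  by (auto simp: det2_def algebra_simps)

lemma det2_add_scale: "det2 (a + t *\<^sub>R b) c = det2 a c + t * det2 b c"
  by (simp add: det2_def algebra_simps)

lemma det2_scaleL: "det2 (t *\<^sub>R a) c = t * det2 a c"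
  by (simp add: det2_def algebra_simps)

lemma det2_self: "det2 a a = 0"
  by (simp add: det2_def algebra_simps)

lemma det2_swap: "det2 a b = - det2 b a" by (simp add: det2_def)

lemma pt_eq0: "(u::pt) = 0 \<longleftrightarrow> fst u = 0 \<and> snd u = 0"
  by (simp add: prod_eq_iff)

lemma det2_par:
  assumes "u \<noteq> 0" "det2 u w = 0"
  shows "\<exists>k. w = k *\<^sub>R u"
proof (cases "fst u = 0")
  case True
  then have "snd u \<noteq> 0" using assms(1) pt_eq0 by auto
  then show ?thesis using assms True
    by (intro exI[of _ "snd w / snd u"]) (auto simp: prod_eq_iff det2_def field_simps)
next
  case False
  then show ?thesis using assms
    by (intro exI[of _ "fst w / fst u"]) (auto simp: prod_eq_iff det2_def field_simps)
qed

lemma det2_par_iff: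
  assumes "u \<noteq> 0" "w \<noteq> 0" "det2 u w = 0"
  shows "det2 a u = 0 \<longleftrightarrow> det2 a w = 0"
proof -
  obtain k where k: "w = k *\<^sub>R u" using det2_par assms by blast
  have "k \<noteq> 0" using assms k by auto
  then show ?thesis using k by (simp add: det2_lin)
qed

lemma line_iff:
  assumes "p \<noteq> q"
  shows "x \<in> line_through p q \<longleftrightarrow> det2 (x - p) (q - p) = 0"
proof
  assume "x \<in> line_through p q"
  then obtain t where "x = p + t *\<^sub>R (q - p)" by (auto simp: line_through_def)
  then have "x - p = t *\<^sub>R (q - p)" by simp
  then show "det2 (x - p) (q - p) = 0" by (simp add: det2_def)
next
  assume "det2 (x - p) (q - p) = 0"
  moreover have "q - p \<noteq> 0" using assms by simp
  ultimately obtain k where "x - p = k *\<^sub>R (q - p)"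
    using det2_par[of "q - p" "x - p"] det2_swap by (metis neg_equal_0_iff_equal)
  then have "x = p + k *\<^sub>R (q - p)" by (simp add: algebra_simps)
  then show "x \<in> line_through p q" by (auto simp: line_through_def)
qed

lemma line_through_sym: "line_through p q = line_through q p"
proof (cases "p = q")
  case True then show ?thesis by simp
next
  case False
  then show ?thesis
    by (auto simp: line_iff[OF False] line_iff[OF False[symmetric]] det2_def algebra_simps)
qed

lemma parallel_iff:
  assumes "p \<noteq> q" "r \<noteq> s"
  shows "parallel (line_through p q) (line_through r s) \<longleftrightarrow> det2 (q - p) (s - r) = 0"
proof
  assume "parallel (line_through p q) (line_through r s)"
  then obtain v where v: "line_through r s = (\<lambda>x. x + v) ` line_through p q"
    by (auto simp: parallel_def)
  have "r \<in> line_through r s" "s \<in> line_through r s"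
    by (auto simp: line_through_def intro: exI[of _ 0] exI[of _ 1])
  then have "r - v \<in> line_through p q" "s - v \<in> line_through p q"
    unfolding v by auto
  then have "det2 (r - v - p) (q - p) = 0" "det2 (s - v - p) (q - p) = 0"
    using line_iff[OF assms(1)] by auto
  then show "det2 (q - p) (s - r) = 0"
    by (auto simp: det2_def algebra_simps)
next
  assume d: "det2 (q - p) (s - r) = 0"
  have nz: "q - p \<noteq> 0" "s - r \<noteq> 0" using assms by auto
  have "line_through r s = (\<lambda>x. x + (r - p)) ` line_through p q"
  proof (rule set_eqI)
    fix y
    have "y \<in> (\<lambda>x. x + (r - p)) ` line_through p q \<longleftrightarrow> y - (r - p) \<in> line_through p q"
      by (auto simp: image_iff intro: bexI[of _ "y - (r - p)"])
    also have "\<dots> \<longleftrightarrow> det2 (y - r) (q - p) = 0"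
      using line_iff[OF assms(1)] by (simp add: algebra_simps)
    also have "\<dots> \<longleftrightarrow> det2 (y - r) (s - r) = 0"
      using det2_par_iff[OF nz d] by simp
    also have "\<dots> \<longleftrightarrow> y \<in> line_through r s" using line_iff[OF assms(2)] by simp
    finally show "y \<in> line_through r s \<longleftrightarrow> y \<in> (\<lambda>x. x + (r - p)) ` line_through p q" by simp
  qed
  then show "parallel (line_through p q) (line_through r s)" unfolding parallel_def by blast
qed

lemma collinear_iff_det:
  "collinear {a, b, c} \<longleftrightarrow> det2 (b - a) (c - a) = 0"
proof -
  have e: "{a,b,c} = {b,a,c}" by auto
  have "collinear {a,b,c} \<longleftrightarrow> collinear {0, b - a, c - a}"
    unfolding e by (rule collinear_3) (simp add: NO_MATCH_def)
  also have "\<dots> \<longleftrightarrow> b - a = 0 \<or> c - a = 0 \<or> (\<exists>k. c - a = k *\<^sub>R (b - a))"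
    by (rule collinear_lemma)
  also have "\<dots> \<longleftrightarrow> det2 (b - a) (c - a) = 0"
  proof
    assume "b - a = 0 \<or> c - a = 0 \<or> (\<exists>k. c - a = k *\<^sub>R (b - a))"
    then show "det2 (b - a) (c - a) = 0"
    proof (elim disjE exE)
      fix k assume "c - a = k *\<^sub>R (b - a)"
      then show ?thesis by (simp add: det2_def)
    qed (simp_all add: det2_def)
  next
    assume "det2 (b - a) (c - a) = 0"
    then show "b - a = 0 \<or> c - a = 0 \<or> (\<exists>k. c - a = k *\<^sub>R (b - a))"
      using det2_par by blast
  qed
  finally show ?thesis .
qed

definition ip :: "pt \<Rightarrow> pt \<Rightarrow> pt \<Rightarrow> pt \<Rightarrow> pt" where
  "ip p q r s = p + (det2 (r - p) (s - r) / det2 (q - p) (s - r)) *\<^sub>R (q - p)"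

lemma ip_on:
  assumes "det2 (q - p) (s - r) \<noteq> 0"
  shows "det2 (ip p q r s - p) (q - p) = 0" "det2 (ip p q r s - r) (s - r) = 0"
proof -
  define t where "t = det2 (r - p) (s - r) / det2 (q - p) (s - r)"
  have ipd: "ip p q r s = p + t *\<^sub>R (q - p)" by (simp add: ip_def t_def)
  show "det2 (ip p q r s - p) (q - p) = 0" unfolding ipd by (simp add: det2_def)
  have "ip p q r s - r = (p - r) + t *\<^sub>R (q - p)" unfolding ipd by (simp add: algebra_simps)
  then have "det2 (ip p q r s - r) (s - r) = det2 (p - r) (s - r) + t * det2 (q - p) (s - r)"
    by (simp only: det2_add_scale)
  also have "t * det2 (q - p) (s - r) = det2 (r - p) (s - r)" using assms by (simp add: t_def)
  finally show "det2 (ip p q r s - r) (s - r) = 0" by (simp add: det2_def algebra_simps)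
qed

lemma ip_unique:
  assumes "det2 (q - p) (s - r) \<noteq> 0" "det2 (x - p) (q - p) = 0" "det2 (x - r) (s - r) = 0"
  shows "x = ip p q r s"
proof -
  have "q - p \<noteq> 0" using assms(1) by (auto simp: det2_def)
  then obtain k where k: "x - p = k *\<^sub>R (q - p)"
    using det2_par[of "q - p" "x - p"] assms(2) det2_swap by (metis neg_equal_0_iff_equal)
  have x: "x = p + k *\<^sub>R (q - p)" using k by (simp add: algebra_simps)
  have "det2 (p - r) (s - r) + k * det2 (q - p) (s - r) = 0"
    using assms(3) unfolding x by (simp add: det2_def algebra_simps)
  moreover have "det2 (r - p) (s - r) = - det2 (p - r) (s - r)" by (simp add: det2_def algebra_simps)
  ultimately have "k * det2 (q - p) (s - r) = det2 (r - p) (s - r)" by linarith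
  then have "k = det2 (r - p) (s - r) / det2 (q - p) (s - r)"
    using assms(1) by (simp add: eq_divide_eq)
  then show ?thesis using x by (simp add: ip_def)
qed

definition CL :: "pt set \<Rightarrow> bool" where
  "CL D \<longleftrightarrow> (\<forall>p q r s x. p \<in> D \<longrightarrow> q \<in> D \<longrightarrow> r \<in> D \<longrightarrow> s \<in> D \<longrightarrow>
     det2 (q - p) (s - r) \<noteq> 0 \<longrightarrow> det2 (x - p) (q - p) = 0 \<longrightarrow> det2 (x - r) (s - r) = 0 \<longrightarrow> x \<in> D)"

lemma CLD:
  assumes "CL D" "p \<in> D" "q \<in> D" "r \<in> D" "s \<in> D" "det2 (q - p) (s - r) \<noteq> 0"
    "det2 (x - p) (q - p) = 0" "det2 (x - r) (s - r) = 0"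
  shows "x \<in> D"
  using assms unfolding CL_def by blast

lemma tendsto_det2[tendsto_intros]:
  "(f \<longlongrightarrow> a) F \<Longrightarrow> (g \<longlongrightarrow> b) F \<Longrightarrow> ((\<lambda>n. det2 (f n) (g n)) \<longlongrightarrow> det2 a b) F"
  unfolding det2_def by (intro tendsto_intros)

lemma CL_closure:
  assumes "CL D"
  shows "CL (closure D)"
  unfolding CL_def
proof (intro allI impI)
  fix p q r s x
  assume p: "p \<in> closure D" and q: "q \<in> closure D" and r: "r \<in> closure D" and s: "s \<in> closure D"
    and d: "det2 (q - p) (s - r) \<noteq> 0" and x1: "det2 (x - p) (q - p) = 0" and x2: "det2 (x - r) (s - r) = 0"
  obtain pn where pn: "\<forall>n. pn n \<in> D" "pn \<longlonglongrightarrow> p" using p closure_sequential by blast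
  obtain qn where qn: "\<forall>n. qn n \<in> D" "qn \<longlonglongrightarrow> q" using q closure_sequential by blast
  obtain rn where rn: "\<forall>n. rn n \<in> D" "rn \<longlonglongrightarrow> r" using r closure_sequential by blast
  obtain sn where sn: "\<forall>n. sn n \<in> D" "sn \<longlonglongrightarrow> s" using s closure_sequential by blast
  have dn: "(\<lambda>n. det2 (qn n - pn n) (sn n - rn n)) \<longlonglongrightarrow> det2 (q - p) (s - r)"
    using pn qn rn sn by (intro tendsto_intros)
  have ev: "eventually (\<lambda>n. det2 (qn n - pn n) (sn n - rn n) \<noteq> 0) sequentially"
    using tendsto_imp_eventually_ne[OF dn d] .
  have "eventually (\<lambda>n. ip (pn n) (qn n) (rn n) (sn n) \<in> closure D) sequentially"
  proof (rule eventually_mono[OF ev])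
    fix n assume "det2 (qn n - pn n) (sn n - rn n) \<noteq> 0"
    then have "ip (pn n) (qn n) (rn n) (sn n) \<in> D"
      using CLD[OF assms _ _ _ _ _ ip_on] pn qn rn sn by blast
    then show "ip (pn n) (qn n) (rn n) (sn n) \<in> closure D" using closure_subset by blast
  qed
  moreover have "(\<lambda>n. ip (pn n) (qn n) (rn n) (sn n)) \<longlonglongrightarrow> ip p q r s"
    unfolding ip_def using pn qn rn sn d by (intro tendsto_intros) auto
  ultimately have "ip p q r s \<in> closure D"
    by (intro Lim_in_closed_set[of "closure D"]) auto
  then show "x \<in> closure D" using ip_unique[OF d x1 x2] by simp
qed

lemma CL2:
  assumes "CL D" "p1 \<in> D" "p2 \<in> D" "p3 \<in> D" "p4 \<in> D"
    and "det2 (p2 - p1) (x - p1) = 0" "det2 (p4 - p3) (x - p3) = 0"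
    and "det2 (p2 - p1) (p3 - p1) \<noteq> 0 \<or> det2 (p2 - p1) (p4 - p1) \<noteq> 0"
    and "det2 (p4 - p3) (p1 - p3) \<noteq> 0 \<or> det2 (p4 - p3) (p2 - p3) \<noteq> 0"
  shows "x \<in> D"
proof -
  have u: "p2 - p1 \<noteq> 0" using assms(8) by (auto simp: det2_def)
  have w: "p4 - p3 \<noteq> 0" using assms(9) by (auto simp: det2_def)
  have "det2 (p2 - p1) (p4 - p3) \<noteq> 0"
  proof
    assume h: "det2 (p2 - p1) (p4 - p3) = 0"
    then obtain k where k: "p4 - p3 = k *\<^sub>R (p2 - p1)" using det2_par u by blast
    have "k \<noteq> 0" using w k by auto
    have "det2 (k *\<^sub>R (p2 - p1)) (x - p3) = 0" using assms(7) k by simp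
    then have "k * det2 (p2 - p1) (x - p3) = 0" by (simp only: det2_scaleL)
    then have h3: "det2 (p2 - p1) (x - p3) = 0" using \<open>k \<noteq> 0\<close> by simp
    have "det2 (p2 - p1) (p3 - p1) = det2 (p2 - p1) (x - p1) - det2 (p2 - p1) (x - p3)"
      by (simp add: det2_def algebra_simps)
    then have a: "det2 (p2 - p1) (p3 - p1) = 0" using assms(6) h3 by simp
    have "p4 - p1 = (p3 - p1) + k *\<^sub>R (p2 - p1)" using k by (simp add: algebra_simps)
    then have "det2 (p4 - p1) (p2 - p1) = det2 (p3 - p1) (p2 - p1) + k * det2 (p2 - p1) (p2 - p1)"
      by (simp only: det2_add_scale)
    then have "det2 (p4 - p1) (p2 - p1) = 0" using a det2_swap[of "p3 - p1" "p2 - p1"] det2_self by simp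
    then have "det2 (p2 - p1) (p4 - p1) = 0" using det2_swap[of "p4 - p1" "p2 - p1"] by simp
    then show False using a assms(8) by simp
  qed
  moreover have "det2 (x - p1) (p2 - p1) = 0" using assms(6) det2_swap[of "p2 - p1" "x - p1"] by simp
  moreover have "det2 (x - p3) (p4 - p3) = 0" using assms(7) det2_swap[of "p4 - p3" "x - p3"] by simp
  ultimately show ?thesis using CLD[OF assms(1-5)] by blast
qed

lemma line_no_iso:
  assumes "p \<noteq> q" "\<forall>y. det2 (y - p) (q - p) = 0 \<longrightarrow> y \<in> S" "x \<in> S" "det2 (x - p) (q - p) = 0"
  shows "\<not> x isolated_in S"
proof
  assume "x isolated_in S"
  then obtain e where e: "e > 0" "\<forall>y\<in>S. dist x y < e \<longrightarrow> y = x"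
    by (auto simp: isolated_in_dist_Ex_iff)
  have nq: "norm (q - p) > 0" using assms(1) by simp
  define y where "y = x + (e / (2 * norm (q - p))) *\<^sub>R (q - p)"
  have "y - p = (x - p) + (e / (2 * norm (q - p))) *\<^sub>R (q - p)" by (simp add: y_def algebra_simps)
  then have "det2 (y - p) (q - p) = det2 (x - p) (q - p) + (e / (2 * norm (q - p))) * det2 (q - p) (q - p)"
    by (simp only: det2_add_scale)
  then have "det2 (y - p) (q - p) = 0" using assms(4) det2_self by simp
  then have yS: "y \<in> S" using assms(2) by blast
  have yx: "y - x = (e / (2 * norm (q - p))) *\<^sub>R (q - p)" by (simp add: y_def)
  have "dist x y = norm ((e / (2 * norm (q - p))) *\<^sub>R (q - p))"
    by (simp only: dist_norm norm_minus_commute[of x y] yx)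
  also have "\<dots> = e / 2" using nq e(1) by simp
  finally have "dist x y = e / 2" .
  moreover have "y \<noteq> x" using nq e(1) yx by auto
  ultimately show False using e yS by auto
qed

lemma iso_lines:
  assumes "p \<noteq> q" "r \<noteq> s" "x isolated_in (line_through p q \<inter> line_through r s)"
  shows "det2 (q - p) (s - r) \<noteq> 0 \<and> det2 (x - p) (q - p) = 0 \<and> det2 (x - r) (s - r) = 0"
proof -
  have xin: "x \<in> line_through p q" "x \<in> line_through r s"
    using assms(3) by (auto simp: isolated_in_def)
  then have x1: "det2 (x - p) (q - p) = 0" and x2: "det2 (x - r) (s - r) = 0"
    using line_iff assms by auto
  have "det2 (q - p) (s - r) \<noteq> 0"
  proof
    assume h: "det2 (q - p) (s - r) = 0"
    have all: "\<forall>y. det2 (y - p) (q - p) = 0 \<longrightarrow> y \<in> line_through p q \<inter> line_through r s"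
    proof (intro allI impI)
      fix y assume y: "det2 (y - p) (q - p) = 0"
      have "det2 (y - x) (q - p) = 0" using y x1 by (simp add: det2_def algebra_simps)
      then have "det2 (y - x) (s - r) = 0"
        using det2_par_iff[of "q - p" "s - r" "y - x"] h assms(1,2) by simp
      then have "det2 (y - r) (s - r) = 0" using x2 by (simp add: det2_def algebra_simps)
      then show "y \<in> line_through p q \<inter> line_through r s" using y line_iff assms by auto
    qed
    show False using line_no_iso[OF assms(1) all _ x1] assms(3) xin by simp
  qed
  then show ?thesis using x1 x2 by simp
qed

lemma ip_iso:
  assumes "det2 (q - p) (s - r) \<noteq> 0"
  shows "ip p q r s isolated_in (line_through p q \<inter> line_through r s)"
proof -
  have pq: "p \<noteq> q" "r \<noteq> s" using assms by (auto simp: det2_def)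
  have "line_through p q \<inter> line_through r s = {ip p q r s}"
  proof (rule set_eqI)
    fix y
    show "y \<in> line_through p q \<inter> line_through r s \<longleftrightarrow> y \<in> {ip p q r s}"
      unfolding line_iff[OF pq(1)] line_iff[OF pq(2)] Int_iff
      using ip_unique[OF assms, of y] ip_on[OF assms] by auto
  qed
  then show ?thesis by (auto simp: isolated_in_def intro: exI[of _ UNIV])
qed

type_synonym v3 = "real \<times> real \<times> real"

definition det3 :: "v3 \<Rightarrow> v3 \<Rightarrow> v3 \<Rightarrow> real" where
  "det3 a b c = fst a * (fst (snd b) * snd (snd c) - snd (snd b) * fst (snd c))
     - fst (snd a) * (fst b * snd (snd c) - snd (snd b) * fst c)
     + snd (snd a) * (fst b * fst (snd c) - fst (snd b) * fst c)"

definition sdot :: "v3 \<Rightarrow> v3 \<Rightarrow> real" where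
  "sdot s v = fst s * fst v + fst (snd s) * fst (snd v) + snd (snd s) * snd (snd v)"

definition Phi :: "real \<Rightarrow> real \<Rightarrow> v3 \<Rightarrow> pt" where
  "Phi p q v = (p * fst (snd v) / sdot (1 - p - q, p, q) v, q * snd (snd v) / sdot (1 - p - q, p, q) v)"

lemma det_Phi:
  assumes "sdot (1 - p - q, p, q) a \<noteq> 0" "sdot (1 - p - q, p, q) b \<noteq> 0" "sdot (1 - p - q, p, q) c \<noteq> 0"
  shows "det2 (Phi p q b - Phi p q a) (Phi p q c - Phi p q a) =
     p * q * (1 - p - q) * det3 a b c / (sdot (1 - p - q, p, q) a * sdot (1 - p - q, p, q) b * sdot (1 - p - q, p, q) c)"
proof -
  obtain a1 a2 a3 where a: "a = (a1, a2, a3)" by (cases a) auto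
  obtain b1 b2 b3 where b: "b = (b1, b2, b3)" by (cases b) auto
  obtain c1 c2 c3 where c: "c = (c1, c2, c3)" by (cases c) auto
  define sa where "sa = (1 - p - q) * a1 + p * a2 + q * a3"
  define sb where "sb = (1 - p - q) * b1 + p * b2 + q * b3"
  define sc where "sc = (1 - p - q) * c1 + p * c2 + q * c3"
  have nz: "sa \<noteq> 0" "sb \<noteq> 0" "sc \<noteq> 0" using assms by (simp_all add: a b c sdot_def sa_def sb_def sc_def)
  have "det2 (Phi p q b - Phi p q a) (Phi p q c - Phi p q a) =
    (p * b2 / sb - p * a2 / sa) * (q * c3 / sc - q * a3 / sa) - (q * b3 / sb - q * a3 / sa) * (p * c2 / sc - p * a2 / sa)"
    by (simp add: Phi_def det2_def a b c sdot_def sa_def sb_def sc_def)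
  also have "\<dots> = p * q * ((b2 * sa - a2 * sb) * (c3 * sa - a3 * sc) - (b3 * sa - a3 * sb) * (c2 * sa - a2 * sc)) / (sa * sa * sb * sc)"
    using nz by (simp add: field_simps)
  also have "(b2 * sa - a2 * sb) * (c3 * sa - a3 * sc) - (b3 * sa - a3 * sb) * (c2 * sa - a2 * sc)
     = sa * ((1 - p - q) * det3 a b c)"
    by (simp add: a b c det3_def sa_def sb_def sc_def) algebra
  finally have h: "det2 (Phi p q b - Phi p q a) (Phi p q c - Phi p q a) =
     p * q * (sa * ((1 - p - q) * det3 a b c)) / (sa * sa * sb * sc)" .
  have s': "sdot (1 - p - q, p, q) a = sa" "sdot (1 - p - q, p, q) b = sb" "sdot (1 - p - q, p, q) c = sc"
    by (simp_all add: a b c sdot_def sa_def sb_def sc_def)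
  show ?thesis unfolding s' h using nz by (simp add: field_simps)
qed

lemma det_Phi_zero_iff:
  assumes "sdot (1 - p - q, p, q) a \<noteq> 0" "sdot (1 - p - q, p, q) b \<noteq> 0" "sdot (1 - p - q, p, q) c \<noteq> 0"
    and "p * q * (1 - p - q) \<noteq> 0"
  shows "det2 (Phi p q b - Phi p q a) (Phi p q c - Phi p q a) = 0 \<longleftrightarrow> det3 a b c = 0"
  unfolding det_Phi[OF assms(1-3)] using assms by simp

definition PCL :: "v3 set \<Rightarrow> v3 \<Rightarrow> bool" where
  "PCL V \<sigma> \<longleftrightarrow> (\<forall>u1 u2 u3 u4 w. u1 \<in> V \<longrightarrow> u2 \<in> V \<longrightarrow> u3 \<in> V \<longrightarrow> u4 \<in> V \<longrightarrow>
     sdot \<sigma> w \<noteq> 0 \<longrightarrow> det3 u1 u2 w = 0 \<longrightarrow> det3 u3 u4 w = 0 \<longrightarrow>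
     (det3 u1 u2 u3 \<noteq> 0 \<or> det3 u1 u2 u4 \<noteq> 0) \<longrightarrow> (det3 u3 u4 u1 \<noteq> 0 \<or> det3 u3 u4 u2 \<noteq> 0) \<longrightarrow> w \<in> V)"

lemma PCLD:
  assumes "PCL V \<sigma>" "u1 \<in> V" "u2 \<in> V" "u3 \<in> V" "u4 \<in> V" "sdot \<sigma> w \<noteq> 0"
    "det3 u1 u2 w = 0" "det3 u3 u4 w = 0"
    "det3 u1 u2 u3 \<noteq> 0 \<or> det3 u1 u2 u4 \<noteq> 0" "det3 u3 u4 u1 \<noteq> 0 \<or> det3 u3 u4 u2 \<noteq> 0"
  shows "w \<in> V"
  using assms unfolding PCL_def by blast

lemma PCL_from_CL:
  assumes "CL E" "p * q * (1 - p - q) \<noteq> 0"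
  shows "PCL {v. sdot (1 - p - q, p, q) v \<noteq> 0 \<and> Phi p q v \<in> E} (1 - p - q, p, q)"
  unfolding PCL_def
proof (intro allI impI)
  fix u1 u2 u3 u4 w
  assume u: "u1 \<in> {v. sdot (1 - p - q, p, q) v \<noteq> 0 \<and> Phi p q v \<in> E}"
     "u2 \<in> {v. sdot (1 - p - q, p, q) v \<noteq> 0 \<and> Phi p q v \<in> E}"
     "u3 \<in> {v. sdot (1 - p - q, p, q) v \<noteq> 0 \<and> Phi p q v \<in> E}"
     "u4 \<in> {v. sdot (1 - p - q, p, q) v \<noteq> 0 \<and> Phi p q v \<in> E}"
    and sw: "sdot (1 - p - q, p, q) w \<noteq> 0"
    and d1: "det3 u1 u2 w = 0" and d2: "det3 u3 u4 w = 0"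
    and c1: "det3 u1 u2 u3 \<noteq> 0 \<or> det3 u1 u2 u4 \<noteq> 0"
    and c2: "det3 u3 u4 u1 \<noteq> 0 \<or> det3 u3 u4 u2 \<noteq> 0"
  have s: "sdot (1 - p - q, p, q) u1 \<noteq> 0" "sdot (1 - p - q, p, q) u2 \<noteq> 0"
      "sdot (1 - p - q, p, q) u3 \<noteq> 0" "sdot (1 - p - q, p, q) u4 \<noteq> 0" using u by auto
  have inE: "Phi p q u1 \<in> E" "Phi p q u2 \<in> E" "Phi p q u3 \<in> E" "Phi p q u4 \<in> E" using u by auto
  note z = det_Phi_zero_iff[OF _ _ _ assms(2)]
  have "Phi p q w \<in> E"
  proof (rule CL2[OF assms(1) inE])
    show "det2 (Phi p q u2 - Phi p q u1) (Phi p q w - Phi p q u1) = 0" using z[OF s(1,2) sw] d1 by simp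
    show "det2 (Phi p q u4 - Phi p q u3) (Phi p q w - Phi p q u3) = 0" using z[OF s(3,4) sw] d2 by simp
    show "det2 (Phi p q u2 - Phi p q u1) (Phi p q u3 - Phi p q u1) \<noteq> 0 \<or>
          det2 (Phi p q u2 - Phi p q u1) (Phi p q u4 - Phi p q u1) \<noteq> 0"
      using z[OF s(1,2,3)] z[OF s(1,2,4)] c1 by simp
    show "det2 (Phi p q u4 - Phi p q u3) (Phi p q u1 - Phi p q u3) \<noteq> 0 \<or>
          det2 (Phi p q u4 - Phi p q u3) (Phi p q u2 - Phi p q u3) \<noteq> 0"
      using z[OF s(3,4,1)] z[OF s(3,4,2)] c2 by simp
  qed
  then show "w \<in> {v. sdot (1 - p - q, p, q) v \<noteq> 0 \<and> Phi p q v \<in> E}" using sw by simp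
qed

lemma PCL_frame:
  assumes "PCL V \<sigma>" "\<And>a b c. det3 (F a) (F b) (F c) = k * det3 a b c" "k \<noteq> 0"
    "\<And>v. sdot \<sigma> (F v) = sdot \<sigma>' v"
  shows "PCL {v. F v \<in> V} \<sigma>'"
  unfolding PCL_def
proof (intro allI impI)
  fix u1 u2 u3 u4 w
  assume u: "u1 \<in> {v. F v \<in> V}" "u2 \<in> {v. F v \<in> V}" "u3 \<in> {v. F v \<in> V}" "u4 \<in> {v. F v \<in> V}"
    and sw: "sdot \<sigma>' w \<noteq> 0"
    and d1: "det3 u1 u2 w = 0" and d2: "det3 u3 u4 w = 0"
    and c1: "det3 u1 u2 u3 \<noteq> 0 \<or> det3 u1 u2 u4 \<noteq> 0"
    and c2: "det3 u3 u4 u1 \<noteq> 0 \<or> det3 u3 u4 u2 \<noteq> 0"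
  have "F w \<in> V"
    by (rule PCLD[of V \<sigma> "F u1" "F u2" "F u3" "F u4" "F w", OF assms(1)])
      (use u sw d1 d2 c1 c2 assms(3) in \<open>simp_all add: assms(2,4)\<close>)
  then show "w \<in> {v. F v \<in> V}" by simp
qed

definition sw12 :: "v3 \<Rightarrow> v3" where "sw12 v = (fst (snd v), fst v, snd (snd v))"
definition sw23 :: "v3 \<Rightarrow> v3" where "sw23 v = (fst v, snd (snd v), fst (snd v))"
definition sw13 :: "v3 \<Rightarrow> v3" where "sw13 v = (snd (snd v), fst (snd v), fst v)"

lemma sw_det:
  "det3 (sw12 a) (sw12 b) (sw12 c) = (-1) * det3 a b c"
  "det3 (sw23 a) (sw23 b) (sw23 c) = (-1) * det3 a b c"
  "det3 (sw13 a) (sw13 b) (sw13 c) = (-1) * det3 a b c"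
  by (simp_all add: det3_def sw12_def sw23_def sw13_def algebra_simps)

lemma sw_sdot:
  "sdot s (sw12 v) = sdot (sw12 s) v" "sdot s (sw23 v) = sdot (sw23 s) v" "sdot s (sw13 v) = sdot (sw13 s) v"
  by (simp_all add: sdot_def sw12_def sw23_def sw13_def algebra_simps)

locale genl =
  fixes V :: "v3 set" and \<sigma> :: v3
  assumes pcl: "PCL V \<sigma>"
    and pos: "fst \<sigma> > 0" "fst (snd \<sigma>) > 0" "snd (snd \<sigma>) > 0"
    and ev: "(1, 0, 0) \<in> V" "(0, 1, 0) \<in> V" "(0, 0, 1) \<in> V" "(1, 1, 1) \<in> V"
begin

lemma genl_sw:
  "genl {v. sw12 v \<in> V} (sw12 \<sigma>)" "genl {v. sw23 v \<in> V} (sw23 \<sigma>)" "genl {v. sw13 v \<in> V} (sw13 \<sigma>)"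
proof -
  show "genl {v. sw12 v \<in> V} (sw12 \<sigma>)"
  proof unfold_locales
    show "PCL {v. sw12 v \<in> V} (sw12 \<sigma>)" by (rule PCL_frame[OF pcl sw_det(1)]) (simp_all add: sw_sdot)
  qed (use pos ev in \<open>auto simp: sw12_def\<close>)
  show "genl {v. sw23 v \<in> V} (sw23 \<sigma>)"
  proof unfold_locales
    show "PCL {v. sw23 v \<in> V} (sw23 \<sigma>)" by (rule PCL_frame[OF pcl sw_det(2)]) (simp_all add: sw_sdot)
  qed (use pos ev in \<open>auto simp: sw23_def\<close>)
  show "genl {v. sw13 v \<in> V} (sw13 \<sigma>)"
  proof unfold_locales
    show "PCL {v. sw13 v \<in> V} (sw13 \<sigma>)" by (rule PCL_frame[OF pcl sw_det(3)]) (simp_all add: sw_sdot)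
  qed (use pos ev in \<open>auto simp: sw13_def\<close>)
qed

lemma spos: "a \<ge> 0 \<Longrightarrow> b \<ge> 0 \<Longrightarrow> c \<ge> 0 \<Longrightarrow> a + b + c > 0 \<Longrightarrow> sdot \<sigma> (a, b, c) \<noteq> 0"
proof -
  assume h: "a \<ge> 0" "b \<ge> 0" "c \<ge> 0" "a + b + c > 0"
  have "fst \<sigma> * a + fst (snd \<sigma>) * b + snd (snd \<sigma>) * c > 0"
  proof (cases "a > 0")
    case True then show ?thesis using h pos by (simp add: add_pos_nonneg mult_nonneg_nonneg)
  next
    case False
    then show ?thesis
    proof (cases "b > 0")
      case True then show ?thesis using h pos by (simp add: add_pos_nonneg mult_nonneg_nonneg add_nonneg_pos)
    next
      case False then have "c > 0" using h \<open>\<not> a > 0\<close> by linarith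
      then show ?thesis using h pos by (simp add: add_nonneg_pos mult_nonneg_nonneg)
    qed
  qed
  then show ?thesis by (simp add: sdot_def)
qed

lemma feet: "(1, 1, 0) \<in> V"
  by (rule PCLD[OF pcl ev(1) ev(2) ev(3) ev(4)], rule spos) (auto simp: det3_def)

end

context genl begin

lemma add12:
  assumes "(x, y, 0) \<in> V" "x > 0" "y > 0"
  shows "(x + y, y, 0) \<in> V"
proof -
  have x01: "(0, 1, 1) \<in> V" and x11: "(1, 0, 1) \<in> V"
    using genl.feet[OF genl_sw(3)] genl.feet[OF genl_sw(2)] by (simp_all add: sw13_def sw23_def)
  have h: "(x + y, y, y) \<in> V"
    by (rule PCLD[OF pcl assms(1) x11 ev(1) x01], rule spos) (use assms in \<open>auto simp: det3_def algebra_simps\<close>)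
  show ?thesis
    by (rule PCLD[OF pcl ev(3) h ev(1) ev(2)], rule spos) (use assms in \<open>auto simp: det3_def algebra_simps\<close>)
qed

lemma nat12: "n \<ge> 1 \<Longrightarrow> (real n, 1, 0) \<in> V"
proof (induction n rule: dec_induct)
  case base then show ?case using feet by simp
next
  case (step n)
  then show ?case using add12[of "real n" 1] by (simp add: add.commute)
qed

lemma mult:
  assumes "(a, b, 0) \<in> V" "(0, b, c) \<in> V" "a > 0" "b > 0" "c > 0"
  shows "(a, b, c) \<in> V"
  by (rule PCLD[OF pcl ev(3) assms(1) ev(1) assms(2)], rule spos) (use assms in \<open>auto simp: det3_def algebra_simps\<close>)

lemma proj:
  assumes "(a, b, c) \<in> V" "a > 0" "b > 0" "c > 0"
  shows "(a, 0, c) \<in> V"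
  by (rule PCLD[OF pcl ev(2) assms(1) ev(1) ev(3)], rule spos) (use assms in \<open>auto simp: det3_def algebra_simps\<close>)

lemma m13: "m \<ge> 1 \<Longrightarrow> n \<ge> 1 \<Longrightarrow> (real m, 0, real n) \<in> V"
proof -
  assume mn: "m \<ge> 1" "n \<ge> 1"
  have "(real n, 1, 0) \<in> {v. sw13 v \<in> V}" using genl.nat12[OF genl_sw(3) mn(2)] .
  then have "(0, 1, real n) \<in> V" by (simp add: sw13_def)
  then have "(real m, 1, real n) \<in> V" using mult[OF nat12[OF mn(1)]] mn by simp
  then show ?thesis using proj mn by simp
qed

lemma allpos: "a \<ge> 1 \<Longrightarrow> b \<ge> 1 \<Longrightarrow> c \<ge> 1 \<Longrightarrow> (real a, real b, real c) \<in> V"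
proof -
  assume h: "a \<ge> 1" "b \<ge> 1" "c \<ge> 1"
  have "(real a, 0, real b) \<in> {v. sw23 v \<in> V}" using genl.m13[OF genl_sw(2) h(1,2)] .
  then have 1: "(real a, real b, 0) \<in> V" by (simp add: sw23_def)
  have "(real b, 0, real c) \<in> {v. sw12 v \<in> V}" using genl.m13[OF genl_sw(1) h(2,3)] .
  then have 2: "(0, real b, real c) \<in> V" by (simp add: sw12_def)
  show ?thesis using mult[OF 1 2] h by simp
qed

end

definition lin3 :: "v3 \<Rightarrow> v3 \<Rightarrow> v3 \<Rightarrow> v3 \<Rightarrow> v3" where
  "lin3 g1 g2 g3 w = (fst w * fst g1 + fst (snd w) * fst g2 + snd (snd w) * fst g3,
                      fst w * fst (snd g1) + fst (snd w) * fst (snd g2) + snd (snd w) * fst (snd g3),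
                      fst w * snd (snd g1) + fst (snd w) * snd (snd g2) + snd (snd w) * snd (snd g3))"

lemma det3_lin3: "det3 (lin3 g1 g2 g3 a) (lin3 g1 g2 g3 b) (lin3 g1 g2 g3 c) = det3 g1 g2 g3 * det3 a b c"
  by (simp add: det3_def lin3_def) algebra

lemma sdot_lin3: "sdot s (lin3 g1 g2 g3 w) = sdot (sdot s g1, sdot s g2, sdot s g3) w"
  by (simp add: sdot_def lin3_def algebra_simps)

lemma lin3_scale: "lin3 g1 g2 g3 (k * a, k * b, k * c) = (k * fst (lin3 g1 g2 g3 (a,b,c)), k * fst (snd (lin3 g1 g2 g3 (a,b,c))), k * snd (snd (lin3 g1 g2 g3 (a,b,c))))"
  by (simp add: lin3_def algebra_simps)

lemma Phi_scale:
  assumes "k \<noteq> 0"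
  shows "Phi p q (k * fst v, k * fst (snd v), k * snd (snd v)) = Phi p q v"
proof -
  have "sdot (1 - p - q, p, q) (k * fst v, k * fst (snd v), k * snd (snd v)) = k * sdot (1 - p - q, p, q) v"
    by (simp add: sdot_def algebra_simps)
  then show ?thesis using assms by (simp add: Phi_def)
qed

lemma ceil_lim:
  fixes a :: real
  shows "(\<lambda>n. of_int \<lceil>real (Suc n) * a\<rceil> / real (Suc n)) \<longlonglongrightarrow> a"
proof (rule tendsto_sandwich[of "\<lambda>n. a" _ _ "\<lambda>n. a + inverse (real (Suc n))"])
  show "\<forall>\<^sub>F n in sequentially. a \<le> of_int \<lceil>real (Suc n) * a\<rceil> / real (Suc n)"
  proof (rule always_eventually, rule allI)
    fix n
    have "real (Suc n) * a \<le> of_int \<lceil>real (Suc n) * a\<rceil>" by (rule le_of_int_ceiling)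
    then show "a \<le> of_int \<lceil>real (Suc n) * a\<rceil> / real (Suc n)"
      by (simp add: field_simps del: of_nat_Suc)
  qed
  show "\<forall>\<^sub>F n in sequentially. of_int \<lceil>real (Suc n) * a\<rceil> / real (Suc n) \<le> a + inverse (real (Suc n))"
  proof (rule always_eventually, rule allI)
    fix n
    have "of_int \<lceil>real (Suc n) * a\<rceil> \<le> real (Suc n) * a + 1" by linarith
    then show "of_int \<lceil>real (Suc n) * a\<rceil> / real (Suc n) \<le> a + inverse (real (Suc n))"
      by (simp add: field_simps del: of_nat_Suc)
  qed
  show "(\<lambda>n. a) \<longlonglongrightarrow> a" by simp
  show "(\<lambda>n. a + inverse (real (Suc n))) \<longlonglongrightarrow> a"
    using tendsto_add[OF tendsto_const LIMSEQ_inverse_real_of_nat, of a] by simp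
qed

lemma lin3_e: "lin3 g1 g2 g3 (1, 0, 0) = g1" "lin3 g1 g2 g3 (0, 1, 0) = g2" "lin3 g1 g2 g3 (0, 0, 1) = g3"
  by (simp_all add: lin3_def)

lemma ceil_pos_nat:
  assumes "(x::real) > 0" shows "nat \<lceil>x\<rceil> \<ge> 1"
proof -
  have "real_of_int \<lceil>x\<rceil> \<ge> x" by (rule le_of_int_ceiling)
  then have "real_of_int \<lceil>x\<rceil> > 0" using assms by linarith
  then have "\<lceil>x\<rceil> > 0" by simp
  then show ?thesis by linarith
qed

lemma cramer:
  assumes "det3 g1 g2 g3 \<noteq> 0"
  shows "lin3 g1 g2 g3 (det3 v g2 g3 / det3 g1 g2 g3, det3 g1 v g3 / det3 g1 g2 g3, det3 g1 g2 v / det3 g1 g2 g3) = v"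
proof -
  let ?d = "det3 g1 g2 g3"
  have e1: "det3 v g2 g3 * fst g1 + det3 g1 v g3 * fst g2 + det3 g1 g2 v * fst g3 = ?d * fst v"
    by (simp add: det3_def) algebra
  have e2: "det3 v g2 g3 * fst (snd g1) + det3 g1 v g3 * fst (snd g2) + det3 g1 g2 v * fst (snd g3) = ?d * fst (snd v)"
    by (simp add: det3_def) algebra
  have e3: "det3 v g2 g3 * snd (snd g1) + det3 g1 v g3 * snd (snd g2) + det3 g1 g2 v * snd (snd g3) = ?d * snd (snd v)"
    by (simp add: det3_def) algebra
  show ?thesis
  proof (rule prod_eqI)
    show "fst (lin3 g1 g2 g3 (det3 v g2 g3 / ?d, det3 g1 v g3 / ?d, det3 g1 g2 v / ?d)) = fst v"
      using e1 assms by (simp add: lin3_def field_simps)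
    show "snd (lin3 g1 g2 g3 (det3 v g2 g3 / ?d, det3 g1 v g3 / ?d, det3 g1 g2 v / ?d)) = snd v"
      using e2 e3 assms by (simp add: lin3_def field_simps prod_eq_iff)
  qed
qed

lemma frame_core:
  fixes E :: "pt set" and p q :: real and g1 g2 g3 :: v3
  defines "lam \<equiv> (1 - p - q, p, q)"
  defines "V \<equiv> {v. sdot lam v \<noteq> 0 \<and> Phi p q v \<in> E}"
  assumes cE: "closed E" and CLE: "CL E" and K: "p * q * (1 - p - q) \<noteq> 0"
    and g: "g1 \<in> V" "g2 \<in> V" "g3 \<in> V" "lin3 g1 g2 g3 (1, 1, 1) \<in> V"
    and gpos: "sdot lam g1 > 0" "sdot lam g2 > 0" "sdot lam g3 > 0"
    and gdet: "det3 g1 g2 g3 \<noteq> 0"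
  shows "E = UNIV"
proof -
  let ?L = "lin3 g1 g2 g3"
  let ?s = "(sdot lam g1, sdot lam g2, sdot lam g3)"
  have pclV: "PCL V lam" unfolding V_def lam_def using PCL_from_CL[OF CLE K] .
  have pcl': "PCL {w. ?L w \<in> V} ?s"
    by (rule PCL_frame[OF pclV det3_lin3 gdet sdot_lin3])
  interpret G: genl "{w. ?L w \<in> V}" ?s
    by unfold_locales (use pcl' gpos g in \<open>simp_all add: lin3_e\<close>)
  have sL: "sdot lam (?L w) = sdot ?s w" for w by (rule sdot_lin3)
  have approx: "Phi p q (?L w) \<in> E" if w: "fst w > 0" "fst (snd w) > 0" "snd (snd w) > 0" for w
  proof -
    obtain w1 w2 w3 where wd: "w = (w1, w2, w3)" by (cases w) auto
    have w': "w1 > 0" "w2 > 0" "w3 > 0" using w wd by auto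
    define A where "A n = nat \<lceil>real (Suc n) * w1\<rceil>" for n
    define B where "B n = nat \<lceil>real (Suc n) * w2\<rceil>" for n
    define C where "C n = nat \<lceil>real (Suc n) * w3\<rceil>" for n
    have ge1: "A n \<ge> 1" "B n \<ge> 1" "C n \<ge> 1" for n
      unfolding A_def B_def C_def by (rule ceil_pos_nat, use w' in simp)+
    have rA: "real (A n) = of_int \<lceil>real (Suc n) * w1\<rceil>" for n using ge1(1)[of n] by (simp add: A_def)
    have rB: "real (B n) = of_int \<lceil>real (Suc n) * w2\<rceil>" for n using ge1(2)[of n] by (simp add: B_def)
    have rC: "real (C n) = of_int \<lceil>real (Suc n) * w3\<rceil>" for n using ge1(3)[of n] by (simp add: C_def)
    define x where "x n = (real (A n) / real (Suc n), real (B n) / real (Suc n), real (C n) / real (Suc n))" for n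
    have inE: "Phi p q (?L (x n)) \<in> E" for n
    proof -
      have "?L (real (A n), real (B n), real (C n)) \<in> V" using G.allpos[OF ge1] by simp
      then have m: "Phi p q (?L (real (A n), real (B n), real (C n))) \<in> E" by (simp add: V_def)
      have "x n = (inverse (real (Suc n)) * real (A n), inverse (real (Suc n)) * real (B n), inverse (real (Suc n)) * real (C n))"
        by (simp add: x_def field_simps del: of_nat_Suc)
      then have "Phi p q (?L (x n)) = Phi p q (?L (real (A n), real (B n), real (C n)))"
        using Phi_scale[of "inverse (real (Suc n))"] by (simp only: lin3_scale) simp
      then show ?thesis using m by simp
    qed
    have x1: "(\<lambda>n. real (A n) / real (Suc n)) \<longlonglongrightarrow> w1" unfolding rA by (rule ceil_lim)
    have x2: "(\<lambda>n. real (B n) / real (Suc n)) \<longlonglongrightarrow> w2" unfolding rB by (rule ceil_lim)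
    have x3: "(\<lambda>n. real (C n) / real (Suc n)) \<longlonglongrightarrow> w3" unfolding rC by (rule ceil_lim)
    have spos: "sdot lam (?L w) \<noteq> 0"
    proof -
      have "sdot ?s w > 0" using w' gpos by (simp add: sdot_def wd add_pos_pos)
      then show ?thesis using sL by simp
    qed
    have "(\<lambda>n. Phi p q (?L (x n))) \<longlonglongrightarrow> Phi p q (?L w)"
      using x1 x2 x3 spos unfolding Phi_def x_def wd lin3_def sdot_def lam_def
      by (intro tendsto_intros) simp_all
    then show ?thesis by (rule Lim_in_closed_set[OF cE, rotated 2]) (simp_all add: inE)
  qed
  have mem: "u \<in> {w. ?L w \<in> V}" if "fst u > 0" "fst (snd u) > 0" "snd (snd u) > 0" for u
  proof -
    have "sdot ?s u > 0" using that gpos by (simp add: sdot_def add_pos_pos)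
    then show ?thesis using approx[OF that] sL[of u] by (simp add: V_def)
  qed
  have pnz: "p \<noteq> 0" "q \<noteq> 0" "1 - p - q \<noteq> 0" using K by auto
  show ?thesis
  proof (rule set_eqI, rule iffI)
    fix z :: pt
    define vz where "vz = ((1 - fst z - snd z) / (1 - p - q), fst z / p, snd z / q)"
    have svz: "sdot lam vz = 1" using pnz by (simp add: vz_def sdot_def lam_def)
    have Phivz: "Phi p q vz = z" using svz pnz by (simp add: Phi_def vz_def lam_def[symmetric])
    define w where "w = (det3 vz g2 g3 / det3 g1 g2 g3, det3 g1 vz g3 / det3 g1 g2 g3, det3 g1 g2 vz / det3 g1 g2 g3)"
    have Lw: "?L w = vz" unfolding w_def by (rule cramer[OF gdet])
    have sw: "sdot ?s w = 1" using sL[of w] Lw svz by simp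
    obtain w1 w2 w3 where wd: "w = (w1, w2, w3)" by (cases w) auto
    define M where "M = 1 + \<bar>w1\<bar> + \<bar>w2\<bar> + \<bar>w3\<bar>"
    have M: "M > 0" "\<bar>w1\<bar> \<le> M" "\<bar>w2\<bar> \<le> M" "\<bar>w3\<bar> \<le> M" by (auto simp: M_def)
    define e where "e = 1 / (2 * M)"
    have epos: "e > 0" using M by (simp add: e_def)
    have eb: "e * \<bar>wi\<bar> \<le> 1/2" if "\<bar>wi\<bar> \<le> M" for wi
      using M that by (simp add: e_def field_simps)
    have pw: "t + e * wi > 0" if "t \<ge> 1" "\<bar>wi\<bar> \<le> M" for t wi
    proof -
      have "e * \<bar>wi\<bar> \<le> 1/2" using eb that(2) .
      moreover have "- (e * \<bar>wi\<bar>) \<le> e * wi" using epos by (simp add: abs_if)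
      ultimately show ?thesis using that(1) by linarith
    qed
    have via: "w \<in> {w. ?L w \<in> V}"
      if ab: "det3 (a1, a2, a3) w (b1, b2, b3) \<noteq> 0" "a1 \<ge> 1" "a2 \<ge> 1" "a3 \<ge> 1" "b1 \<ge> 1" "b2 \<ge> 1" "b3 \<ge> 1"
      for a1 a2 a3 b1 b2 b3
    proof (rule PCLD[of _ _ "(a1, a2, a3)" "(a1 + e * w1, a2 + e * w2, a3 + e * w3)" "(b1, b2, b3)" "(b1 + e * w1, b2 + e * w2, b3 + e * w3)" w, OF pcl'])
      show "(a1, a2, a3) \<in> {w. ?L w \<in> V}" using ab by (intro mem) auto
      show "(b1, b2, b3) \<in> {w. ?L w \<in> V}" using ab by (intro mem) auto
      show "(a1 + e * w1, a2 + e * w2, a3 + e * w3) \<in> {w. ?L w \<in> V}" using ab M by (intro mem) (auto intro!: pw)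
      show "(b1 + e * w1, b2 + e * w2, b3 + e * w3) \<in> {w. ?L w \<in> V}" using ab M by (intro mem) (auto intro!: pw)
      show "sdot ?s w \<noteq> 0" using sw by simp
      show "det3 (a1, a2, a3) (a1 + e * w1, a2 + e * w2, a3 + e * w3) w = 0"
        by (simp add: wd det3_def algebra_simps)
      show "det3 (b1, b2, b3) (b1 + e * w1, b2 + e * w2, b3 + e * w3) w = 0"
        by (simp add: wd det3_def algebra_simps)
      have "det3 (a1, a2, a3) (a1 + e * w1, a2 + e * w2, a3 + e * w3) (b1, b2, b3) = e * det3 (a1, a2, a3) w (b1, b2, b3)"
        by (simp add: wd det3_def algebra_simps)
      then show "det3 (a1, a2, a3) (a1 + e * w1, a2 + e * w2, a3 + e * w3) (b1, b2, b3) \<noteq> 0 \<or>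
          det3 (a1, a2, a3) (a1 + e * w1, a2 + e * w2, a3 + e * w3) (b1 + e * w1, b2 + e * w2, b3 + e * w3) \<noteq> 0"
        using ab(1) epos by simp
      have "det3 (b1, b2, b3) (b1 + e * w1, b2 + e * w2, b3 + e * w3) (a1, a2, a3) = - e * det3 (a1, a2, a3) w (b1, b2, b3)"
        by (simp add: wd det3_def algebra_simps)
      then show "det3 (b1, b2, b3) (b1 + e * w1, b2 + e * w2, b3 + e * w3) (a1, a2, a3) \<noteq> 0 \<or>
          det3 (b1, b2, b3) (b1 + e * w1, b2 + e * w2, b3 + e * w3) (a1 + e * w1, a2 + e * w2, a3 + e * w3) \<noteq> 0"
        using ab(1) epos by simp
    qed
    have "w \<in> {w. ?L w \<in> V}"
    proof (cases "det3 (1, 1, 1) w (1, 2, 3) \<noteq> 0")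
      case True then show ?thesis using via[of 1 1 1 1 2 3] by simp
    next
      case F1: False
      show ?thesis
      proof (cases "det3 (1, 1, 1) w (1, 3, 2) \<noteq> 0")
        case True then show ?thesis using via[of 1 1 1 1 3 2] by simp
      next
        case False
        then have "w2 = w1" "w3 = w1" using F1 by (simp_all add: wd det3_def)
        then have wd2: "w = (w1 * 1, w1 * 1, w1 * 1)" using wd by simp
        have "w1 \<noteq> 0" using sw wd2 by (auto simp: sdot_def)
        have "Phi p q (?L w) = Phi p q (?L (1, 1, 1))"
          unfolding wd2 lin3_scale using Phi_scale[OF \<open>w1 \<noteq> 0\<close>] by simp
        moreover have "sdot lam (?L w) \<noteq> 0" using sw sL by simp
        ultimately show ?thesis using g(4) by (simp add: V_def)
      qed
    qed
    then have "Phi p q vz \<in> E" using Lw by (simp add: V_def)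
    then show "z \<in> E" using Phivz by simp
  qed simp
qed

lemma conv_constr:
  assumes pcl: "PCL V \<sigma>" and ev: "(1, 0, 0) \<in> V" "(0, 1, 0) \<in> V" "(0, 0, 1) \<in> V" "(1, 1, 1) \<in> V"
    and s: "sdot \<sigma> (1, 1, 0) \<noteq> 0" "sdot \<sigma> (0, 1, 1) \<noteq> 0" "sdot \<sigma> (1, 2, 1) \<noteq> 0" "sdot \<sigma> (1, 2, 2) \<noteq> 0"
  shows "(1, 2, 2) \<in> V"
proof -
  have E: "(1, 1, 0) \<in> V" by (rule PCLD[OF pcl ev(1) ev(2) ev(3) ev(4) s(1)]) (auto simp: det3_def)
  have X: "(0, 1, 1) \<in> V" by (rule PCLD[OF pcl ev(1) ev(4) ev(2) ev(3) s(2)]) (auto simp: det3_def)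
  have H: "(1, 2, 1) \<in> V" by (rule PCLD[OF pcl E X ev(2) ev(4) s(3)]) (auto simp: det3_def)
  show ?thesis by (rule PCLD[OF pcl ev(3) H ev(4) X s(4)]) (auto simp: det3_def)
qed

lemma sw_PCL:
  assumes "PCL V \<sigma>"
  shows "PCL {v. sw12 v \<in> V} (sw12 \<sigma>)" "PCL {v. sw23 v \<in> V} (sw23 \<sigma>)" "PCL {v. sw13 v \<in> V} (sw13 \<sigma>)"
  by (rule PCL_frame[OF assms sw_det(1)], simp_all add: sw_sdot)
     (rule PCL_frame[OF assms sw_det(2)], simp_all add: sw_sdot,
      rule PCL_frame[OF assms sw_det(3)], simp_all add: sw_sdot)

lemma core:
  fixes E :: "pt set" and p q :: real
  assumes cE: "closed E" and CLE: "CL E"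
    and inE: "(0, 0) \<in> E" "(1, 0) \<in> E" "(0, 1) \<in> E" "(p, q) \<in> E"
    and gp: "p \<noteq> 0" "q \<noteq> 0" "1 - p - q \<noteq> 0" "p \<noteq> 1" "q \<noteq> 1" "p + q \<noteq> 0"
  shows "E = UNIV"
proof -
  define lam where "lam = (1 - p - q, p, q)"
  define V where "V = {v. sdot lam v \<noteq> 0 \<and> Phi p q v \<in> E}"
  have K: "p * q * (1 - p - q) \<noteq> 0" using gp by simp
  have pcl: "PCL V lam" unfolding V_def lam_def by (rule PCL_from_CL[OF CLE K])
  have memV: "v \<in> V \<longleftrightarrow> sdot lam v \<noteq> 0 \<and> Phi p q v \<in> E" for v by (simp add: V_def)
  have e: "(1, 0, 0) \<in> V" "(0, 1, 0) \<in> V" "(0, 0, 1) \<in> V" "(1, 1, 1) \<in> V"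
     "(-1, 0, 0) \<in> V" "(0, -1, 0) \<in> V" "(0, 0, -1) \<in> V"
    using gp inE by (simp_all add: memV sdot_def lam_def Phi_def)
  note fc = frame_core[OF cE CLE K, folded lam_def, folded V_def]
  consider "1 - p - q > 0" "p > 0" "q > 0" | "1 - p - q < 0" "p > 0" "q > 0"
    | "1 - p - q > 0" "p < 0" "q > 0" | "1 - p - q > 0" "p > 0" "q < 0"
    | "1 - p - q > 0" "p < 0" "q < 0" | "1 - p - q < 0" "p > 0" "q < 0"
    | "1 - p - q < 0" "p < 0" "q > 0"
  proof -
    have d: "p > 0 \<or> p < 0" "q > 0 \<or> q < 0" "1 - p - q > 0 \<or> 1 - p - q < 0" using gp by auto
    have n: "\<not> (1 - p - q < 0 \<and> p < 0 \<and> q < 0)" by linarith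
    show ?thesis using d n that by blast
  qed
  then show ?thesis
  proof cases
    case 1
    show ?thesis
      by (rule fc[OF e(1) e(2) e(3)]) (use e 1 in \<open>simp_all add: lin3_def sdot_def lam_def det3_def\<close>)
  next
    case 2
    have "(1, 2, 2) \<in> V"
      by (rule conv_constr[OF pcl e(1-4)]) (use 2 gp in \<open>simp_all add: sdot_def lam_def\<close>)
    then show ?thesis
      by (intro fc[OF e(4) e(2) e(3)]) (use 2 in \<open>simp_all add: lin3_def sdot_def lam_def det3_def\<close>)
  next
    case 3
    have "(1, 2, 2) \<in> {v. sw12 v \<in> V}"
      by (rule conv_constr[OF sw_PCL(1)[OF pcl]]) (use 3 gp e in \<open>simp_all add: sdot_def lam_def sw12_def\<close>)
    then have "(2, 1, 2) \<in> V" by (simp add: sw12_def)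
    then show ?thesis
      by (intro fc[OF e(4) e(1) e(3)]) (use 3 in \<open>simp_all add: lin3_def sdot_def lam_def det3_def\<close>)
  next
    case 4
    have "(1, 2, 2) \<in> {v. sw13 v \<in> V}"
      by (rule conv_constr[OF sw_PCL(3)[OF pcl]]) (use 4 gp e in \<open>simp_all add: sdot_def lam_def sw13_def\<close>)
    then have "(2, 2, 1) \<in> V" by (simp add: sw13_def)
    then show ?thesis
      by (intro fc[OF e(4) e(1) e(2)]) (use 4 in \<open>simp_all add: lin3_def sdot_def lam_def det3_def\<close>)
  next
    case 5
    show ?thesis
      by (rule fc[OF e(6) e(7) e(4)]) (use e 5 in \<open>simp_all add: lin3_def sdot_def lam_def det3_def\<close>)
  next
    case 6
    show ?thesis
      by (rule fc[OF e(5) e(7) e(4)]) (use e 6 in \<open>simp_all add: lin3_def sdot_def lam_def det3_def\<close>)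
  next
    case 7
    show ?thesis
      by (rule fc[OF e(5) e(6) e(4)]) (use e 7 in \<open>simp_all add: lin3_def sdot_def lam_def det3_def\<close>)
  qed
qed

lemma det2_lin2: "det2 (a *\<^sub>R u + b *\<^sub>R v) (c *\<^sub>R u + d *\<^sub>R v) = (a * d - b * c) * det2 u v"
  by (simp add: det2_def algebra_simps)

lemma cramer2:
  fixes u1 u2 v1 v2 y1 y2 :: real
  assumes "u1 * v2 - u2 * v1 \<noteq> 0"
  shows "((y1 * v2 - y2 * v1) / (u1 * v2 - u2 * v1)) * u1 + ((u1 * y2 - u2 * y1) / (u1 * v2 - u2 * v1)) * v1 = y1"
    and "((y1 * v2 - y2 * v1) / (u1 * v2 - u2 * v1)) * u2 + ((u1 * y2 - u2 * y1) / (u1 * v2 - u2 * v1)) * v2 = y2"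
proof -
  let ?d = "u1 * v2 - u2 * v1"
  have "((y1 * v2 - y2 * v1) / ?d) * u1 + ((u1 * y2 - u2 * y1) / ?d) * v1
        = ((y1 * v2 - y2 * v1) * u1 + (u1 * y2 - u2 * y1) * v1) / ?d"
    by (simp add: add_divide_distrib)
  also have "(y1 * v2 - y2 * v1) * u1 + (u1 * y2 - u2 * y1) * v1 = y1 * ?d" by algebra
  finally show "((y1 * v2 - y2 * v1) / ?d) * u1 + ((u1 * y2 - u2 * y1) / ?d) * v1 = y1"
    using assms by simp
  have "((y1 * v2 - y2 * v1) / ?d) * u2 + ((u1 * y2 - u2 * y1) / ?d) * v2
        = ((y1 * v2 - y2 * v1) * u2 + (u1 * y2 - u2 * y1) * v2) / ?d"
    by (simp add: add_divide_distrib)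
  also have "(y1 * v2 - y2 * v1) * u2 + (u1 * y2 - u2 * y1) * v2 = y2 * ?d" by algebra
  finally show "((y1 * v2 - y2 * v1) / ?d) * u2 + ((u1 * y2 - u2 * y1) / ?d) * v2 = y2"
    using assms by simp
qed

lemma dense4:
  assumes CLDD: "CL D" and c: "c0 \<in> D" "c1 \<in> D" "c2 \<in> D" "c3 \<in> D"
    and nd: "det2 (c1 - c0) (c2 - c0) \<noteq> 0"
    and n1: "det2 (c2 - c0) (c3 - c0) \<noteq> 0" and n2: "det2 (c1 - c0) (c3 - c0) \<noteq> 0"
    and n3: "det2 (c2 - c1) (c3 - c1) \<noteq> 0"
    and o1: "det2 (c1 - c0) (c3 - c2) \<noteq> 0" and o2: "det2 (c2 - c0) (c3 - c1) \<noteq> 0"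
    and o3: "det2 (c3 - c0) (c2 - c1) \<noteq> 0"
  shows "closure D = UNIV"
proof -
  define u where "u = c1 - c0"
  define v where "v = c2 - c0"
  define \<delta> where "\<delta> = det2 u v"
  have d0: "\<delta> \<noteq> 0" using nd by (simp add: \<delta>_def u_def v_def)
  define T where "T x = c0 + fst x *\<^sub>R u + snd x *\<^sub>R v" for x :: pt
  have Tdiff: "T a - T b = fst (a - b) *\<^sub>R u + snd (a - b) *\<^sub>R v" for a b
    by (simp add: T_def algebra_simps)
  have Tdet: "det2 (T a - T b) (T c - T d) = \<delta> * det2 (a - b) (c - d)" for a b c d
    unfolding Tdiff det2_lin2 by (simp add: \<delta>_def det2_def)
  have Tsurj: "T (det2 (y - c0) v / \<delta>, det2 u (y - c0) / \<delta>) = y" for y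
  proof -
    have dd: "fst u * snd v - snd u * fst v \<noteq> 0" using d0 by (simp add: \<delta>_def det2_def)
    note cr = cramer2[OF dd, of "fst (y - c0)" "snd (y - c0)"]
    have "c0 + (det2 (y - c0) v / \<delta>) *\<^sub>R u + (det2 u (y - c0) / \<delta>) *\<^sub>R v = c0 + (y - c0)"
      unfolding \<delta>_def det2_def using cr by (simp add: prod_eq_iff algebra_simps)
    then show ?thesis by (simp add: T_def)
  qed
  define p where "p = det2 (c3 - c0) v / \<delta>"
  define q where "q = det2 u (c3 - c0) / \<delta>"
  have T: "T (0, 0) = c0" "T (1, 0) = c1" "T (0, 1) = c2" "T (p, q) = c3"
    using Tsurj[of c3] by (simp_all add: T_def u_def v_def p_def q_def)
  define E where "E = closure D"
  have cE: "closed E" and CLE: "CL E" using CL_closure[OF CLDD] by (simp_all add: E_def)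
  define E' where "E' = {x. T x \<in> E}"
  have contT: "continuous (at x) T" for x unfolding T_def by (intro continuous_intros)
  have cE': "closed E'" unfolding E'_def using continuous_closed_vimage[OF cE contT] by (simp add: vimage_def)
  have CLE': "CL E'" unfolding CL_def
  proof (intro allI impI)
    fix a b c d x
    assume h: "a \<in> E'" "b \<in> E'" "c \<in> E'" "d \<in> E'" "det2 (b - a) (d - c) \<noteq> 0"
      "det2 (x - a) (b - a) = 0" "det2 (x - c) (d - c) = 0"
    have "T x \<in> E"
      by (rule CLD[OF CLE, of "T a" "T b" "T c" "T d"]) (use h d0 in \<open>simp_all add: E'_def Tdet\<close>)
    then show "x \<in> E'" by (simp add: E'_def)
  qed
  have sub: "D \<subseteq> E" unfolding E_def by (rule closure_subset)
  have inE: "(0, 0) \<in> E'" "(1, 0) \<in> E'" "(0, 1) \<in> E'" "(p, q) \<in> E'"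
    using T c sub by (auto simp: E'_def)
  have "det2 (c2 - c0) (c3 - c0) = \<delta> * det2 ((0, 1) - (0, 0)) ((p, q) - (0, 0))"
    using Tdet[of "(0,1)" "(0,0)" "(p,q)" "(0,0)"] T by simp
  then have g1: "p \<noteq> 0" using n1 by (simp add: det2_def)
  have "det2 (c1 - c0) (c3 - c0) = \<delta> * det2 ((1, 0) - (0, 0)) ((p, q) - (0, 0))"
    using Tdet[of "(1,0)" "(0,0)" "(p,q)" "(0,0)"] T by simp
  then have g2: "q \<noteq> 0" using n2 by (simp add: det2_def)
  have "det2 (c2 - c1) (c3 - c1) = \<delta> * det2 ((0, 1) - (1, 0)) ((p, q) - (1, 0))"
    using Tdet[of "(0,1)" "(1,0)" "(p,q)" "(1,0)"] T by simp
  then have g3: "1 - p - q \<noteq> 0" using n3 by (simp add: det2_def)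
  have "det2 (c1 - c0) (c3 - c2) = \<delta> * det2 ((1, 0) - (0, 0)) ((p, q) - (0, 1))"
    using Tdet[of "(1,0)" "(0,0)" "(p,q)" "(0,1)"] T by simp
  then have g5: "q \<noteq> 1" using o1 by (simp add: det2_def)
  have "det2 (c2 - c0) (c3 - c1) = \<delta> * det2 ((0, 1) - (0, 0)) ((p, q) - (1, 0))"
    using Tdet[of "(0,1)" "(0,0)" "(p,q)" "(1,0)"] T by simp
  then have g4: "p \<noteq> 1" using o2 by (simp add: det2_def)
  have "det2 (c3 - c0) (c2 - c1) = \<delta> * det2 ((p, q) - (0, 0)) ((0, 1) - (1, 0))"
    using Tdet[of "(p,q)" "(0,0)" "(0,1)" "(1,0)"] T by simp
  then have g6: "p + q \<noteq> 0" using o3 by (simp add: det2_def)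
  have "E' = UNIV" by (rule core[OF cE' CLE' inE g1 g2 g3 g4 g5 g6])
  then have "T x \<in> E" for x unfolding E'_def by (metis UNIV_I mem_Collect_eq)
  then have "y \<in> E" for y using Tsurj[of y] by metis
  then show ?thesis by (auto simp: E_def)
qed

lemma gp_dets:
  assumes "general_position c"
  shows "det2 (c 1 - c 0) (c 2 - c 0) \<noteq> 0"
    "det2 (c 2 - c 0) (c 3 - c 0) \<noteq> 0" "det2 (c 1 - c 0) (c 3 - c 0) \<noteq> 0"
    "det2 (c 2 - c 1) (c 3 - c 1) \<noteq> 0"
    "det2 (c 1 - c 0) (c 3 - c 2) \<noteq> 0" "det2 (c 2 - c 0) (c 3 - c 1) \<noteq> 0"
    "det2 (c 3 - c 0) (c 2 - c 1) \<noteq> 0"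
proof -
  note g = assms[unfolded general_position_def]
  note inj = g[THEN conjunct1]
  note col = g[THEN conjunct2, THEN conjunct1, rule_format]
  note par = g[THEN conjunct2, THEN conjunct2, rule_format]
  have ne: "c i \<noteq> c j" if "i < 4" "j < 4" "i \<noteq> j" for i j
    using inj that unfolding inj_on_def by (meson lessThan_iff)
  have "\<not> collinear {c 0, c 1, c 2}" by (rule col) auto
  then show "det2 (c 1 - c 0) (c 2 - c 0) \<noteq> 0" using collinear_iff_det[of "c 0" "c 1" "c 2"] by simp
  have "\<not> collinear {c 0, c 2, c 3}" by (rule col) auto
  then show "det2 (c 2 - c 0) (c 3 - c 0) \<noteq> 0" using collinear_iff_det[of "c 0" "c 2" "c 3"] by simp
  have "\<not> collinear {c 0, c 1, c 3}" by (rule col) auto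
  then show "det2 (c 1 - c 0) (c 3 - c 0) \<noteq> 0" using collinear_iff_det[of "c 0" "c 1" "c 3"] by simp
  have "\<not> collinear {c 1, c 2, c 3}" by (rule col) auto
  then show "det2 (c 2 - c 1) (c 3 - c 1) \<noteq> 0" using collinear_iff_det[of "c 1" "c 2" "c 3"] by simp
  have "\<not> parallel (line_through (c 0) (c 1)) (line_through (c 2) (c 3))" by (rule par) (simp_all add: doubleton_eq_iff)
  then show "det2 (c 1 - c 0) (c 3 - c 2) \<noteq> 0" using parallel_iff[OF ne[of 0 1] ne[of 2 3]] by simp
  have "\<not> parallel (line_through (c 0) (c 2)) (line_through (c 1) (c 3))" by (rule par) (simp_all add: doubleton_eq_iff)
  then show "det2 (c 2 - c 0) (c 3 - c 1) \<noteq> 0" using parallel_iff[OF ne[of 0 2] ne[of 1 3]] by simp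
  have "\<not> parallel (line_through (c 0) (c 3)) (line_through (c 1) (c 2))" by (rule par) (simp_all add: doubleton_eq_iff)
  then show "det2 (c 3 - c 0) (c 2 - c 1) \<noteq> 0" using parallel_iff[OF ne[of 0 3] ne[of 1 2]] by simp
qed

lemma four: "(i::nat) < 4 \<Longrightarrow> i = 0 \<or> i = 1 \<or> i = 2 \<or> i = 3" by auto

lemma gp_of_dets:
  assumes nd: "det2 (c1 - c0) (c2 - c0) \<noteq> 0"
    and n1: "det2 (c2 - c0) (c3 - c0) \<noteq> 0" and n2: "det2 (c1 - c0) (c3 - c0) \<noteq> 0"
    and n3: "det2 (c2 - c1) (c3 - c1) \<noteq> 0"
    and o1: "det2 (c1 - c0) (c3 - c2) \<noteq> 0" and o2: "det2 (c2 - c0) (c3 - c1) \<noteq> 0"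
    and o3: "det2 (c3 - c0) (c2 - c1) \<noteq> 0"
  shows "general_position (\<lambda>i. if i = 0 then c0 else if i = 1 then c1 else if i = 2 then c2 else c3)"
proof -
  define u where "u = c1 - c0"
  define v where "v = c2 - c0"
  define \<delta> where "\<delta> = det2 u v"
  have d0: "\<delta> \<noteq> 0" using nd by (simp add: \<delta>_def u_def v_def)
  define T where "T x = c0 + fst x *\<^sub>R u + snd x *\<^sub>R v" for x :: pt
  have Tdiff: "T a - T b = fst (a - b) *\<^sub>R u + snd (a - b) *\<^sub>R v" for a b
    by (simp add: T_def algebra_simps)
  have Tdet: "det2 (T a - T b) (T c - T d) = \<delta> * det2 (a - b) (c - d)" for a b c d
    unfolding Tdiff det2_lin2 by (simp add: \<delta>_def det2_def)
  have Tsurj: "T (det2 (y - c0) v / \<delta>, det2 u (y - c0) / \<delta>) = y" for y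
  proof -
    have dd: "fst u * snd v - snd u * fst v \<noteq> 0" using d0 by (simp add: \<delta>_def det2_def)
    note cr = cramer2[OF dd, of "fst (y - c0)" "snd (y - c0)"]
    have "c0 + (det2 (y - c0) v / \<delta>) *\<^sub>R u + (det2 u (y - c0) / \<delta>) *\<^sub>R v = c0 + (y - c0)"
      unfolding \<delta>_def det2_def using cr by (simp add: prod_eq_iff algebra_simps)
    then show ?thesis by (simp add: T_def)
  qed
  define p where "p = det2 (c3 - c0) v / \<delta>"
  define q where "q = det2 u (c3 - c0) / \<delta>"
  have T: "T (0, 0) = c0" "T (1, 0) = c1" "T (0, 1) = c2" "T (p, q) = c3"
    using Tsurj[of c3] by (simp_all add: T_def u_def v_def p_def q_def)
  have "det2 (c2 - c0) (c3 - c0) = \<delta> * det2 ((0, 1) - (0, 0)) ((p, q) - (0, 0))"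
    using Tdet[of "(0,1)" "(0,0)" "(p,q)" "(0,0)"] T by simp
  then have g1: "p \<noteq> 0" using n1 by (simp add: det2_def)
  have "det2 (c1 - c0) (c3 - c0) = \<delta> * det2 ((1, 0) - (0, 0)) ((p, q) - (0, 0))"
    using Tdet[of "(1,0)" "(0,0)" "(p,q)" "(0,0)"] T by simp
  then have g2: "q \<noteq> 0" using n2 by (simp add: det2_def)
  have "det2 (c2 - c1) (c3 - c1) = \<delta> * det2 ((0, 1) - (1, 0)) ((p, q) - (1, 0))"
    using Tdet[of "(0,1)" "(1,0)" "(p,q)" "(1,0)"] T by simp
  then have g3: "1 - p - q \<noteq> 0" using n3 by (simp add: det2_def)
  have "det2 (c1 - c0) (c3 - c2) = \<delta> * det2 ((1, 0) - (0, 0)) ((p, q) - (0, 1))"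
    using Tdet[of "(1,0)" "(0,0)" "(p,q)" "(0,1)"] T by simp
  then have g5: "q \<noteq> 1" using o1 by (simp add: det2_def)
  have "det2 (c2 - c0) (c3 - c1) = \<delta> * det2 ((0, 1) - (0, 0)) ((p, q) - (1, 0))"
    using Tdet[of "(0,1)" "(0,0)" "(p,q)" "(1,0)"] T by simp
  then have g4: "p \<noteq> 1" using o2 by (simp add: det2_def)
  have "det2 (c3 - c0) (c2 - c1) = \<delta> * det2 ((p, q) - (0, 0)) ((0, 1) - (1, 0))"
    using Tdet[of "(p,q)" "(0,0)" "(0,1)" "(1,0)"] T by simp
  then have g6: "p + q \<noteq> 0" using o3 by (simp add: det2_def)
  have g3': "p + q \<noteq> 1" "q \<noteq> 1 - p" "p \<noteq> 1 - q" "1 - p \<noteq> q" "1 - q \<noteq> p" using g3 by auto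
  have g6': "p \<noteq> - q" "q \<noteq> - p" "- p \<noteq> q" "- q \<noteq> p" using g6 by auto
  define P where "P i = (if i = 0 then (0, 0) else if i = 1 then (1, 0) else if i = 2 then (0, 1) else (p, q) :: pt)" for i :: nat
  define c where "c = (\<lambda>i::nat. if i = 0 then c0 else if i = 1 then c1 else if i = 2 then c2 else c3)"
  have cT: "c i = T (P i)" for i using T by (simp add: c_def P_def)
  have cdet: "det2 (c j - c i) (c l - c k) = \<delta> * det2 (P j - P i) (P l - P k)" for i j k l
    unfolding cT by (rule Tdet)
  have Pne: "P i \<noteq> P j" if "i < 4" "j < 4" "i \<noteq> j" for i j
    using four[OF that(1)] four[OF that(2)] that(3) g1 g2 g3' g4 g5 by (auto simp: P_def)
  have cne: "c i \<noteq> c j" if "i < 4" "j < 4" "i \<noteq> j" for i j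
  proof
    assume "c i = c j"
    then have "T (P i) = T (P j)" by (simp add: cT)
    then have "det2 (T (P i) - T (P j)) (T (0, 1) - T (0, 0)) = 0" "det2 (T (1, 0) - T (0, 0)) (T (P i) - T (P j)) = 0"
      by (simp_all add: det2_def)
    then have "det2 (P i - P j) ((0, 1) - (0, 0)) = 0" "det2 ((1, 0) - (0, 0)) (P i - P j) = 0"
      unfolding Tdet using d0 by simp_all
    then have "P i = P j" by (simp add: det2_def prod_eq_iff)
    then show False using Pne that by blast
  qed
  have tri: "det2 (P j - P i) (P k - P i) \<noteq> 0" if "i < 4" "j < 4" "k < 4" "i \<noteq> j" "j \<noteq> k" "i \<noteq> k" for i j k
    using four[OF that(1)] four[OF that(2)] four[OF that(3)] that(4-6)
    apply (elim disjE)
    apply (simp_all add: P_def det2_def)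
    apply (use g1 g2 g3 g4 g5 g6 g3' g6' in \<open>simp_all add: algebra_simps\<close>)
    done
  have quad: "det2 (P j - P i) (P l - P k) \<noteq> 0"
    if "i < 4" "j < 4" "k < 4" "l < 4" "i \<noteq> j" "k \<noteq> l" "\<not> (i = k \<and> j = l)" "\<not> (i = l \<and> j = k)" for i j k l
    using four[OF that(1)] four[OF that(2)] four[OF that(3)] four[OF that(4)] that(5-8)
    apply (elim disjE)
    apply (simp_all add: P_def det2_def)
    apply (use g1 g2 g3 g4 g5 g6 g3' g6' in \<open>simp_all add: algebra_simps\<close>)
    done
  have "general_position c"
    unfolding general_position_def
  proof (intro conjI allI impI)
    show "inj_on c {..<4}" using cne by (auto simp: inj_on_def)
  next
    fix i j k :: nat assume h: "i < 4" "j < 4" "k < 4" "i \<noteq> j \<and> j \<noteq> k \<and> i \<noteq> k"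
    then show "\<not> collinear {c i, c j, c k}"
    proof -
      have "det2 (c j - c i) (c k - c i) \<noteq> 0" using tri[of i j k] h cdet[of j i k i] d0 by simp
      then show ?thesis using collinear_iff_det[of "c i" "c j" "c k"] by simp
    qed
  next
    fix i j k l :: nat assume h: "i < 4" "j < 4" "k < 4" "l < 4" "i \<noteq> j \<and> k \<noteq> l \<and> {i, j} \<noteq> {k, l}"
    then show "\<not> parallel (line_through (c i) (c j)) (line_through (c k) (c l))"
    proof -
      have hh: "\<not> (i = k \<and> j = l)" "\<not> (i = l \<and> j = k)" "i \<noteq> j" "k \<noteq> l"
        using h(5) by (simp_all add: doubleton_eq_iff)
      have "det2 (c j - c i) (c l - c k) \<noteq> 0"
        using quad[OF h(1-4) hh(3,4,1,2)] cdet[of j i l k] d0 by simp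
      then show ?thesis using parallel_iff[OF cne[OF h(1,2) hh(3)] cne[OF h(3,4) hh(4)]] by simp
    qed
  qed
  then show ?thesis by (simp add: c_def)
qed

section \<open>Algorithm facts\<close>

lemma alg_Suc_fst: "fst (alg A Ls Gs c (Suc k)) =
   fst (alg A Ls Gs c k) \<union>
   {x. \<exists>L1\<in>snd (alg A Ls Gs c (Suc k)). \<exists>L2\<in>snd (alg A Ls Gs c (Suc k)). L1 \<noteq> L2 \<and> \<not> parallel L1 L2 \<and> x \<in> L1 \<inter> L2}
   \<union> {x. \<exists>L1\<in>snd (alg A Ls Gs c (Suc k)). \<exists>g\<in>Gs. x isolated_in (L1 \<inter> g)}"
  by (simp add: Let_def)

lemma alg_Suc_snd: "snd (alg A Ls Gs c (Suc k)) =
   snd (alg A Ls Gs c k) \<union> {line_through p q | p q. p \<in> fst (alg A Ls Gs c k) \<and> q \<in> fst (alg A Ls Gs c k) \<and> p \<noteq> q}"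
  by (simp add: Let_def)

lemma alg_mono1: "fst (alg A Ls Gs c k) \<subseteq> fst (alg A Ls Gs c (Suc k))"
  unfolding alg_Suc_fst by blast

lemma alg_mono: "k \<le> m \<Longrightarrow> fst (alg A Ls Gs c k) \<subseteq> fst (alg A Ls Gs c m)"
proof (induction m rule: dec_induct)
  case base then show ?case by simp
next
  case (step m) then show ?case using alg_mono1[of A Ls Gs c m] by blast
qed

lemma alg_Ls: "Ls \<subseteq> snd (alg A Ls Gs c k)"
proof (induction k)
  case 0 then show ?case by simp
next
  case (Suc k) then show ?case unfolding alg_Suc_snd by blast
qed

lemma alg_line: "p \<in> fst (alg A Ls Gs c k) \<Longrightarrow> q \<in> fst (alg A Ls Gs c k) \<Longrightarrow> p \<noteq> q \<Longrightarrow>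
   line_through p q \<in> snd (alg A Ls Gs c (Suc k))"
  unfolding alg_Suc_snd by blast

lemma alg_inter: "L1 \<in> snd (alg A Ls Gs c (Suc k)) \<Longrightarrow> L2 \<in> snd (alg A Ls Gs c (Suc k)) \<Longrightarrow>
   L1 \<noteq> L2 \<Longrightarrow> \<not> parallel L1 L2 \<Longrightarrow> x \<in> L1 \<Longrightarrow> x \<in> L2 \<Longrightarrow> x \<in> fst (alg A Ls Gs c (Suc k))"
  unfolding alg_Suc_fst by blast

lemma alg_iso: "L1 \<in> snd (alg A Ls Gs c (Suc k)) \<Longrightarrow> g \<in> Gs \<Longrightarrow> x isolated_in (L1 \<inter> g) \<Longrightarrow>
   x \<in> fst (alg A Ls Gs c (Suc k))"
  unfolding alg_Suc_fst by blast

lemma parallel_refl: "parallel L L"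
  unfolding parallel_def by (rule exI[of _ 0]) simp

lemma common4:
  fixes S :: "nat \<Rightarrow> 'a set"
  assumes "\<And>k m. k \<le> m \<Longrightarrow> S k \<subseteq> S m"
    and "b1 \<in> (\<Union>k. S k)" "b2 \<in> (\<Union>k. S k)" "b3 \<in> (\<Union>k. S k)" "b4 \<in> (\<Union>k. S k)"
  shows "\<exists>k. b1 \<in> S k \<and> b2 \<in> S k \<and> b3 \<in> S k \<and> b4 \<in> S k"
proof -
  obtain k1 k2 k3 k4 where kk: "b1 \<in> S k1" "b2 \<in> S k2" "b3 \<in> S k3" "b4 \<in> S k4" using assms(2-5) by blast
  define m where "m = max (max k1 k2) (max k3 k4)"
  have "k1 \<le> m" "k2 \<le> m" "k3 \<le> m" "k4 \<le> m" by (simp_all add: m_def)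
  then have "S k1 \<subseteq> S m" "S k2 \<subseteq> S m" "S k3 \<subseteq> S m" "S k4 \<subseteq> S m" using assms(1) by blast+
  then have "b1 \<in> S m" "b2 \<in> S m" "b3 \<in> S m" "b4 \<in> S m" using kk by blast+
  then show ?thesis by blast
qed

lemma dir2:
  assumes lines: "\<forall>L\<in>Ls. is_line L" and gp: "general_position c"
    and nc: "\<not> non_constructible A Ls Gs a"
  shows "\<exists>k. a \<in> fst (alg A Ls Gs c k)"
proof -
  define S where "S k = fst (alg A Ls Gs c k)" for k
  define \<Sigma> where "\<Sigma> = (\<Union>k. S k)"
  have mono: "k \<le> m \<Longrightarrow> S k \<subseteq> S m" for k m unfolding S_def by (rule alg_mono)
  have S0: "S 0 = A \<union> c ` {..<4}" by (simp add: S_def)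
  have cin: "c i \<in> \<Sigma>" if "i < 4" for i using that S0 unfolding \<Sigma>_def by blast
  have A: "A \<subseteq> \<Sigma>" using S0 unfolding \<Sigma>_def by blast
  have three: "x \<in> \<Sigma>" if b: "b1 \<in> \<Sigma>" "b2 \<in> \<Sigma>" "b3 \<in> \<Sigma>" "b4 \<in> \<Sigma>" and h: "b1 \<noteq> b2" "b3 \<noteq> b4"
    "line_through b1 b2 \<noteq> line_through b3 b4" "\<not> parallel (line_through b1 b2) (line_through b3 b4)"
    "x \<in> line_through b1 b2" "x \<in> line_through b3 b4" for b1 b2 b3 b4 x
  proof -
    obtain k where k: "b1 \<in> S k" "b2 \<in> S k" "b3 \<in> S k" "b4 \<in> S k"
      using common4[OF mono b[unfolded \<Sigma>_def]] by blast
    have "x \<in> S (Suc k)"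
      unfolding S_def by (rule alg_inter[OF alg_line alg_line h(3-6)]) (use k h in \<open>simp_all add: S_def\<close>)
    then show ?thesis unfolding \<Sigma>_def by blast
  qed
  have CLS: "CL \<Sigma>" unfolding CL_def
  proof (intro allI impI)
    fix p q r s x
    assume h: "p \<in> \<Sigma>" "q \<in> \<Sigma>" "r \<in> \<Sigma>" "s \<in> \<Sigma>" "det2 (q - p) (s - r) \<noteq> 0"
      "det2 (x - p) (q - p) = 0" "det2 (x - r) (s - r) = 0"
    have ne: "p \<noteq> q" "r \<noteq> s" using h(5) by (auto simp: det2_def)
    have np: "\<not> parallel (line_through p q) (line_through r s)" using parallel_iff[OF ne] h(5) by simp
    have neq: "line_through p q \<noteq> line_through r s" using np parallel_refl by metis
    show "x \<in> \<Sigma>"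
      by (rule three[OF h(1-4) ne neq np]) (use h(6,7) line_iff ne in auto)
  qed
  have dense: "closure \<Sigma> = UNIV"
    by (rule dense4[OF CLS cin cin cin cin gp_dets[OF gp]]) simp_all
  have adm: "admissible A Ls Gs \<Sigma>"
    unfolding admissible_def
  proof (intro conjI ballI allI impI)
    show "closure \<Sigma> = UNIV" by (rule dense)
    show "A \<subseteq> \<Sigma>" by (rule A)
  next
    fix b1 b2 b3 b4 x
    assume "b1 \<in> \<Sigma>" "b2 \<in> \<Sigma>" "b3 \<in> \<Sigma>" "b4 \<in> \<Sigma>"
      "b1 \<noteq> b2 \<and> b3 \<noteq> b4 \<and> line_through b1 b2 \<noteq> line_through b3 b4 \<and>
       \<not> parallel (line_through b1 b2) (line_through b3 b4) \<and> x \<in> line_through b1 b2 \<inter> line_through b3 b4"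
    then show "x \<in> \<Sigma>" using three by blast
  next
    fix b1 b2 x L
    assume b: "b1 \<in> \<Sigma>" "b2 \<in> \<Sigma>" "b1 \<noteq> b2" and L: "L \<in> Ls" and iso: "x isolated_in (line_through b1 b2 \<inter> L)"
    obtain p q where pq: "p \<noteq> q" "L = line_through p q" using lines L unfolding is_line_def by blast
    have d: "det2 (b2 - b1) (q - p) \<noteq> 0" "det2 (x - b1) (b2 - b1) = 0" "det2 (x - p) (q - p) = 0"
      using iso_lines[OF b(3) pq(1)] iso pq(2) by auto
    obtain k where k: "b1 \<in> S k" "b2 \<in> S k" using common4[OF mono b(1)[unfolded \<Sigma>_def] b(2)[unfolded \<Sigma>_def] b(1)[unfolded \<Sigma>_def] b(1)[unfolded \<Sigma>_def]] by blast
    have np: "\<not> parallel (line_through b1 b2) L" using parallel_iff[OF b(3) pq(1)] d pq(2) by simp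
    have neq: "line_through b1 b2 \<noteq> L" using np parallel_refl by metis
    have Lin: "L \<in> snd (alg A Ls Gs c (Suc k))" using alg_Ls L by blast
    have x1: "x \<in> line_through b1 b2" using d(2) line_iff[OF b(3)] by simp
    have x2: "x \<in> L" using d(3) line_iff[OF pq(1)] pq(2) by simp
    have "x \<in> S (Suc k)" unfolding S_def
      by (rule alg_inter[OF alg_line Lin neq np x1 x2]) (use k b in \<open>simp_all add: S_def\<close>)
    then show "x \<in> \<Sigma>" unfolding \<Sigma>_def by blast
  next
    fix b1 b2 x g
    assume b: "b1 \<in> \<Sigma>" "b2 \<in> \<Sigma>" "b1 \<noteq> b2" and g: "g \<in> Gs" and iso: "x isolated_in (line_through b1 b2 \<inter> g)"
    obtain k where k: "b1 \<in> S k" "b2 \<in> S k" using common4[OF mono b(1)[unfolded \<Sigma>_def] b(2)[unfolded \<Sigma>_def] b(1)[unfolded \<Sigma>_def] b(1)[unfolded \<Sigma>_def]] by blast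
    have "x \<in> S (Suc k)" unfolding S_def
      by (rule alg_iso[OF alg_line g iso]) (use k b in \<open>simp_all add: S_def\<close>)
    then show "x \<in> \<Sigma>" unfolding \<Sigma>_def by blast
  qed
  then have "a \<in> \<Sigma>" using nc unfolding non_constructible_def by blast
  then show ?thesis unfolding \<Sigma>_def S_def by blast
qed

lemma dense_meet:
  assumes "closure S = UNIV" "open U" "U \<noteq> {}"
  shows "\<exists>x\<in>S. x \<in> U"
proof (rule ccontr)
  assume "\<not> (\<exists>x\<in>S. x \<in> U)"
  then have "S \<subseteq> - U" by blast
  moreover have "closed (- U)" using assms(2) by (simp add: closed_Compl)
  ultimately have "closure S \<subseteq> - U" by (rule closure_minimal)
  then show False using assms(1,3) by auto
qed

definition LN :: "pt \<Rightarrow> pt \<Rightarrow> pt set" where "LN b d = {x. det2 (x - b) d = 0}"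

lemma LN_closed: "closed (LN b d)"
  unfolding LN_def det2_def by (intro closed_Collect_eq continuous_intros)

lemma avoid:
  assumes "open U" "U \<noteq> {}" "d \<noteq> 0"
  shows "open (U - LN b d)" "U - LN b d \<noteq> {}"
proof -
  show "open (U - LN b d)" using assms(1) LN_closed by (rule open_Diff)
  obtain x where x: "x \<in> U" using assms(2) by blast
  show "U - LN b d \<noteq> {}"
  proof (cases "x \<in> LN b d")
    case False then show ?thesis using x by blast
  next
    case True
    then have dx: "det2 (x - b) d = 0" by (simp add: LN_def)
    obtain e where e: "e > 0" "ball x e \<subseteq> U" using assms(1) x open_contains_ball by blast
    define n where "n = (snd d, - fst d)"
    have dn: "det2 n d = (fst d)\<^sup>2 + (snd d)\<^sup>2" by (simp add: n_def det2_def power2_eq_square)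
    have dpos: "(fst d)\<^sup>2 + (snd d)\<^sup>2 > 0" using assms(3) by (simp add: prod_eq_iff sum_power2_gt_zero_iff)
    have nn: "n \<noteq> 0" using dn dpos by (auto simp: det2_def)
    define t where "t = e / (2 * norm n)"
    have tpos: "t > 0" using e nn by (simp add: t_def)
    define y where "y = x + t *\<^sub>R n"
    have "dist x y = t * norm n" using tpos by (simp add: y_def dist_norm)
    also have "\<dots> = e / 2" using nn by (simp add: t_def)
    finally have "y \<in> U" using e by auto
    have "y - b = (x - b) + t *\<^sub>R n" by (simp add: y_def algebra_simps)
    then have "det2 (y - b) d = det2 (x - b) d + t * det2 n d" by (simp only: det2_add_scale)
    moreover have "t * det2 n d > 0" unfolding dn by (rule mult_pos_pos[OF tpos dpos])
    ultimately have "det2 (y - b) d \<noteq> 0" using dx by linarith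
    then show ?thesis using \<open>y \<in> U\<close> by (auto simp: LN_def)
  qed
qed

lemma line_eq:
  assumes "p \<noteq> q" "x1 \<noteq> x2" "x1 \<in> line_through p q" "x2 \<in> line_through p q"
  shows "line_through x1 x2 = line_through p q"
proof (rule set_eqI)
  fix y
  have h1: "det2 (x1 - p) (q - p) = 0" "det2 (x2 - p) (q - p) = 0" using assms line_iff by auto
  have "det2 (x2 - x1) (q - p) = 0" using h1 by (simp add: det2_def algebra_simps)
  then have par: "det2 (x2 - x1) (q - p) = 0" .
  have "y \<in> line_through x1 x2 \<longleftrightarrow> det2 (y - x1) (x2 - x1) = 0" using line_iff[OF assms(2)] .
  also have "\<dots> \<longleftrightarrow> det2 (y - x1) (q - p) = 0"
    using det2_par_iff[of "x2 - x1" "q - p" "y - x1"] par assms(1,2) by simp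
  also have "\<dots> \<longleftrightarrow> det2 (y - p) (q - p) = 0"
  proof -
    have "det2 (y - x1) (q - p) = det2 (y - p) (q - p) - det2 (x1 - p) (q - p)"
      by (simp add: det2_def algebra_simps)
    then show ?thesis using h1 by simp
  qed
  also have "\<dots> \<longleftrightarrow> y \<in> line_through p q" using line_iff[OF assms(1)] by simp
  finally show "y \<in> line_through x1 x2 \<longleftrightarrow> y \<in> line_through p q" .
qed

lemma dir1:
  assumes lines: "\<forall>L\<in>Ls. is_line L" and nc: "non_constructible A Ls Gs a"
  shows "\<exists>c. general_position c \<and> (\<forall>k. a \<notin> fst (alg A Ls Gs c k))"
proof -
  obtain \<Sigma> where adm: "admissible A Ls Gs \<Sigma>" and aS: "a \<notin> \<Sigma>"
    using nc unfolding non_constructible_def by blast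
  note ad = adm[unfolded admissible_def]
  have dense: "closure \<Sigma> = UNIV" using ad by blast
  have AS: "A \<subseteq> \<Sigma>" using ad by blast
  have three: "x \<in> \<Sigma>" if "b1 \<in> \<Sigma>" "b2 \<in> \<Sigma>" "b3 \<in> \<Sigma>" "b4 \<in> \<Sigma>" "b1 \<noteq> b2" "b3 \<noteq> b4"
    "line_through b1 b2 \<noteq> line_through b3 b4" "\<not> parallel (line_through b1 b2) (line_through b3 b4)"
    "x \<in> line_through b1 b2" "x \<in> line_through b3 b4" for b1 b2 b3 b4 x
    using ad that by blast
  have fourL: "x \<in> \<Sigma>" if "b1 \<in> \<Sigma>" "b2 \<in> \<Sigma>" "b1 \<noteq> b2" "L \<in> Ls" "x isolated_in (line_through b1 b2 \<inter> L)"
    for b1 b2 x L using ad that by blast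
  have fourG: "x \<in> \<Sigma>" if "b1 \<in> \<Sigma>" "b2 \<in> \<Sigma>" "b1 \<noteq> b2" "g \<in> Gs" "x isolated_in (line_through b1 b2 \<inter> g)"
    for b1 b2 x g using ad that by blast
  have pick: "\<exists>x\<in>\<Sigma>. x \<in> U" if "open U" "U \<noteq> {}" for U using dense_meet[OF dense that] .
  have av: "open (U - LN b d) \<and> U - LN b d \<noteq> {}" if "open U \<and> U \<noteq> {}" "d \<noteq> 0" for U b d
    using avoid[of U d b] that by blast
  obtain c0 where c0: "c0 \<in> \<Sigma>" using pick[of UNIV] by auto
  have "(1, 0) \<noteq> (0::pt)" by (simp add: prod_eq_iff)
  then obtain c1 where c1: "c1 \<in> \<Sigma>" "c1 \<notin> LN c0 (1, 0)"
    using pick av[of UNIV "(1, 0)" c0] by blast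
  have c10: "c1 - c0 \<noteq> 0" using c1(2) by (auto simp: LN_def det2_def)
  obtain c2 where c2: "c2 \<in> \<Sigma>" "c2 \<notin> LN c0 (c1 - c0)"
    using pick av[of UNIV "c1 - c0" c0] c10 by blast
  have nd: "det2 (c1 - c0) (c2 - c0) \<noteq> 0" using c2(2) det2_swap[of "c2 - c0" "c1 - c0"] by (simp add: LN_def)
  have c20: "c2 - c0 \<noteq> 0" and c21: "c2 - c1 \<noteq> 0" using nd by (auto simp: det2_def)
  define U3 where "U3 = UNIV - LN c0 (c1 - c0) - LN c0 (c2 - c0) - LN c1 (c2 - c1) - LN c2 (c1 - c0)
     - LN c1 (c2 - c0) - LN c0 (c2 - c1)"
  have "open U3 \<and> U3 \<noteq> {}" unfolding U3_def
    by (intro av) (use c10 c20 c21 in simp_all)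
  then obtain c3 where c3: "c3 \<in> \<Sigma>" "c3 \<in> U3" using pick by blast
  have l: "det2 (c3 - c0) (c1 - c0) \<noteq> 0" "det2 (c3 - c0) (c2 - c0) \<noteq> 0" "det2 (c3 - c1) (c2 - c1) \<noteq> 0"
    "det2 (c3 - c2) (c1 - c0) \<noteq> 0" "det2 (c3 - c1) (c2 - c0) \<noteq> 0" "det2 (c3 - c0) (c2 - c1) \<noteq> 0"
    using c3(2) by (simp_all add: U3_def LN_def)
  have n1: "det2 (c2 - c0) (c3 - c0) \<noteq> 0" using l(2) det2_swap[of "c3 - c0" "c2 - c0"] by simp
  have n2: "det2 (c1 - c0) (c3 - c0) \<noteq> 0" using l(1) det2_swap[of "c3 - c0" "c1 - c0"] by simp
  have n3: "det2 (c2 - c1) (c3 - c1) \<noteq> 0" using l(3) det2_swap[of "c3 - c1" "c2 - c1"] by simp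
  have o1: "det2 (c1 - c0) (c3 - c2) \<noteq> 0" using l(4) det2_swap[of "c3 - c2" "c1 - c0"] by simp
  have o2: "det2 (c2 - c0) (c3 - c1) \<noteq> 0" using l(5) det2_swap[of "c3 - c1" "c2 - c0"] by simp
  define c where "c = (\<lambda>i::nat. if i = 0 then c0 else if i = 1 then c1 else if i = 2 then c2 else c3)"
  have gp: "general_position c" unfolding c_def by (rule gp_of_dets[OF nd n1 n2 n3 o1 o2 l(6)])
  have cS: "c ` {..<4} \<subseteq> \<Sigma>" using c0 c1 c2 c3 by (auto simp: c_def)
  have Lsig: "\<exists>x1 x2. x1 \<in> \<Sigma> \<and> x2 \<in> \<Sigma> \<and> x1 \<noteq> x2 \<and> L = line_through x1 x2" if L: "L \<in> Ls" for L
  proof -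
    obtain p q where pq: "p \<noteq> q" "L = line_through p q" using lines L unfolding is_line_def by blast
    have qp: "q - p \<noteq> 0" using pq by simp
    obtain b1 where b1: "b1 \<in> \<Sigma>" "b1 \<notin> LN p (q - p)" using pick av[of UNIV "q - p" p] qp by blast
    obtain b2 where b2: "b2 \<in> \<Sigma>" "b2 \<notin> LN b1 (q - p)" using pick av[of UNIV "q - p" b1] qp by blast
    have d12: "det2 (b2 - b1) (q - p) \<noteq> 0" using b2(2) by (simp add: LN_def)
    have b21: "b2 - b1 \<noteq> 0" using d12 by (auto simp: det2_def)
    have "open (UNIV - LN b1 (q - p) - LN b1 (b2 - b1)) \<and> UNIV - LN b1 (q - p) - LN b1 (b2 - b1) \<noteq> {}"
      by (intro av) (use qp b21 in simp_all)
    then obtain b3 where b3: "b3 \<in> \<Sigma>" "b3 \<notin> LN b1 (q - p)" "b3 \<notin> LN b1 (b2 - b1)" using pick by blast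
    have d13: "det2 (b3 - b1) (q - p) \<noteq> 0" using b3(2) by (simp add: LN_def)
    have d312: "det2 (b3 - b1) (b2 - b1) \<noteq> 0" using b3(3) by (simp add: LN_def)
    have ne12: "b1 \<noteq> b2" and ne13: "b1 \<noteq> b3" using d12 d13 by (auto simp: det2_def)
    define x1 where "x1 = ip b1 b2 p q"
    define x2 where "x2 = ip b1 b3 p q"
    have x1S: "x1 \<in> \<Sigma>" unfolding x1_def
      by (rule fourL[OF b1(1) b2(1) ne12 L]) (use ip_iso[OF d12] pq in simp)
    have x2S: "x2 \<in> \<Sigma>" unfolding x2_def
      by (rule fourL[OF b1(1) b3(1) ne13 L]) (use ip_iso[OF d13] pq in simp)
    have x1l: "det2 (x1 - b1) (b2 - b1) = 0" "det2 (x1 - p) (q - p) = 0" using ip_on[OF d12] by (simp_all add: x1_def)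
    have x2l: "det2 (x2 - b1) (b3 - b1) = 0" "det2 (x2 - p) (q - p) = 0" using ip_on[OF d13] by (simp_all add: x2_def)
    have x12: "x1 \<noteq> x2"
    proof
      assume e: "x1 = x2"
      have x1b: "x1 - b1 \<noteq> 0"
      proof
        assume "x1 - b1 = 0"
        then have "det2 (b1 - p) (q - p) = 0" using x1l(2) by simp
        then show False using b1(2) by (simp add: LN_def)
      qed
      have a1: "det2 (b2 - b1) (x1 - b1) = 0" using x1l(1) det2_swap[of "x1 - b1" "b2 - b1"] by simp
      have a2: "det2 (b3 - b1) (x1 - b1) = 0" using x2l(1) e det2_swap[of "x1 - b1" "b3 - b1"] by simp
      have "det2 (x1 - b1) (b2 - b1) = 0 \<longleftrightarrow> det2 (x1 - b1) (x1 - b1) = 0"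
        using det2_par_iff[OF b21 x1b a1] by simp
      have "det2 (b3 - b1) (b2 - b1) = 0"
        using det2_par_iff[OF b21 x1b a1, of "b3 - b1"] a2 by simp
      then show False using d312 by simp
    qed
    have "L = line_through x1 x2"
      using line_eq[OF pq(1) x12] x1l(2) x2l(2) line_iff[OF pq(1)] pq(2) by simp
    then show ?thesis using x1S x2S x12 by blast
  qed
  have inv: "fst (alg A Ls Gs c k) \<subseteq> \<Sigma> \<and>
      (\<forall>L\<in>snd (alg A Ls Gs c k). \<exists>x1 x2. x1 \<in> \<Sigma> \<and> x2 \<in> \<Sigma> \<and> x1 \<noteq> x2 \<and> L = line_through x1 x2)" for k
  proof (induction k)
    case 0 then show ?case using AS cS Lsig by simp
  next
    case (Suc k)
    have Lk: "\<forall>L\<in>snd (alg A Ls Gs c (Suc k)). \<exists>x1 x2. x1 \<in> \<Sigma> \<and> x2 \<in> \<Sigma> \<and> x1 \<noteq> x2 \<and> L = line_through x1 x2"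
      unfolding alg_Suc_snd using Suc by blast
    have "fst (alg A Ls Gs c (Suc k)) \<subseteq> \<Sigma>"
    proof
      fix x assume "x \<in> fst (alg A Ls Gs c (Suc k))"
      then consider (old) "x \<in> fst (alg A Ls Gs c k)"
        | (int) L1 L2 where "L1 \<in> snd (alg A Ls Gs c (Suc k))" "L2 \<in> snd (alg A Ls Gs c (Suc k))"
            "L1 \<noteq> L2" "\<not> parallel L1 L2" "x \<in> L1" "x \<in> L2"
        | (iso) L1 g where "L1 \<in> snd (alg A Ls Gs c (Suc k))" "g \<in> Gs" "x isolated_in (L1 \<inter> g)"
        unfolding alg_Suc_fst by blast
      then show "x \<in> \<Sigma>"
      proof cases
        case old then show ?thesis using Suc by blast
      next
        case int
        obtain b1 b2 where B: "b1 \<in> \<Sigma>" "b2 \<in> \<Sigma>" "b1 \<noteq> b2" "L1 = line_through b1 b2" using Lk int(1) by blast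
        obtain b3 b4 where B': "b3 \<in> \<Sigma>" "b4 \<in> \<Sigma>" "b3 \<noteq> b4" "L2 = line_through b3 b4" using Lk int(2) by blast
        show ?thesis using three[OF B(1,2) B'(1,2) B(3) B'(3)] int B(4) B'(4) by simp
      next
        case iso
        obtain b1 b2 where B: "b1 \<in> \<Sigma>" "b2 \<in> \<Sigma>" "b1 \<noteq> b2" "L1 = line_through b1 b2" using Lk iso(1) by blast
        show ?thesis using fourG[OF B(1,2,3) iso(2)] iso(3) B(4) by simp
      qed
    qed
    then show ?case using Lk by blast
  qed
  show ?thesis using gp inv aS by blast
qed

lemma main:
  assumes "\<forall>L\<in>Ls. is_line L"
  shows "non_constructible A Ls Gs a \<noteq> (\<forall>c. general_position c \<longrightarrow> (\<exists>k. a \<in> fst (alg A Ls Gs c k)))"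
  using dir1[OF assms] dir2[OF assms] by blast

theorem mainTheorem12:
  fixes A :: "pt set" and Ls :: "pt set set" and Gs :: "pt set set" and a :: pt
  assumes "finite A" and "finite Ls" and "finite Gs"
    and "\<forall>L\<in>Ls. is_line L"
  shows "non_constructible A Ls Gs a \<noteq>
           (\<forall>c. general_position c \<longrightarrow> (\<exists>k. a \<in> fst (alg A Ls Gs c k)))"
  using main[OF assms(4)] .

end
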